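(* Let $S\subset\mathbb{R}^2$ be a finite set of points in general position and let $a,b,c\in S$ be distinct. Then $ab$ is an exit edge of $S$ with witness $c$ if and only if the dual lines $a^*,b^*,c^*$ bound a triangular cell $\Delta$ of the arrangement $\mathcal{A}$ of the lines $S^*=\{s^*:s\in S\}$ in the projective plane such that $\Delta$ is not the marked cell, $c^*$ is the witness line of $\Delta$, and the point $a^*\cap b^*$ is the exit vertex of $\Delta$.
   Context: General position: no three points collinear. For distinct $a,b,c\in S$, $ab$ is an exit edge with witness $c$ if there is no $p\in S$ such that the line through $a$ and $p$ strictly separates $b$ from $c$, and no $p\in S$ such that the line through $b$ and $p$ strictly separates $a$ from $c$. Duality: a point $p=(p_x,p_y)$ is mapped to the line $p^*: y=p_x x-p_y$, regarded as a line in the real projective plane $\mathbb{P}^2$ (the Euclidean plane plus a line at infinity); $\mathcal{A}$ is the arrangement of the lines $S^*$ in $\mathbb{P}^2$, and its cells are the closures of the connected components of $\mathbb{P}^2$ minus the lines. The marked cell is the cell of $\mathcal{A}$ containing the point at infinity in the vertical direction. Each line $s^*$ is oriented in the direction of increasing $x$, and each side of a cell inherits this orientation. For a triangular cell $\Delta$ other than the marked cell, the oriented sides do not form a directed cycle, so exactly one vertex of $\Delta$ has one incident side directed into it and the other directed out of it; this vertex is the exit vertex of $\Delta$, and the line containing the side of $\Delta$ opposite to it is the witness line of $\Delta$. *)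

theory Defs
  imports "HOL-Analysis.Analysis" "HOL-Analysis.Cross3"
begin

definition orient :: "real \<times> real \<Rightarrow> real \<times> real \<Rightarrow> real \<times> real \<Rightarrow> real" where
  "orient p q r = (fst q - fst p) * (snd r - snd p) - (snd q - snd p) * (fst r - fst p)"

definition general_position :: "(real \<times> real) set \<Rightarrow> bool" where
  "general_position S \<longleftrightarrow>
     (\<forall>p\<in>S. \<forall>q\<in>S. \<forall>r\<in>S. p \<noteq> q \<and> p \<noteq> r \<and> q \<noteq> r \<longrightarrow> orient p q r \<noteq> 0)"

definition strictly_separates ::
    "real \<times> real \<Rightarrow> real \<times> real \<Rightarrow> real \<times> real \<Rightarrow> real \<times> real \<Rightarrow> bool" where
  "strictly_separates a p b c \<longleftrightarrow> a \<noteq> p \<and> orient a p b * orient a p c < 0"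

definition exit_edge :: "(real \<times> real) set \<Rightarrow> real \<times> real \<Rightarrow> real \<times> real \<Rightarrow> real \<times> real \<Rightarrow> bool" where
  "exit_edge S a b c \<longleftrightarrow>
     a \<in> S \<and> b \<in> S \<and> c \<in> S \<and> a \<noteq> b \<and> a \<noteq> c \<and> b \<noteq> c \<and>
     \<not> (\<exists>p\<in>S. p \<noteq> a \<and> strictly_separates a p b c) \<and>
     \<not> (\<exists>p\<in>S. p \<noteq> b \<and> strictly_separates b p a c)"

text \<open>The real projective plane is modelled by the unit sphere in \<open>real^3\<close>,
  a projective point (X:Y:Z) being represented by the antipodal pair of unit vectors
  on the line spanned by (X,Y,Z); the affine point (x,y) is (x:y:1).
  Subsets of the projective plane are represented by their (antipodally symmetric)
  preimages on the sphere.  The dual line of p, \<open>y = p_x x - p_y\<close>, is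
  \<open>p_x X - Y - p_y Z = 0\<close>, with normal vector \<open>dual_normal p\<close>.\<close>

definition S2 :: "(real^3) set" where
  "S2 = sphere 0 1"

definition dual_normal :: "real \<times> real \<Rightarrow> real^3" where
  "dual_normal p = vector [fst p, -1, - snd p]"

definition dual_line :: "real \<times> real \<Rightarrow> (real^3) set" where
  "dual_line p = {v \<in> S2. v \<bullet> dual_normal p = 0}"

text \<open>The complement of the arrangement, and its cells: closures of connected components
  of the projective plane minus the lines (preimage on the sphere: closure of a component
  together with its antipodal copy).\<close>

definition arr_complement :: "(real \<times> real) set \<Rightarrow> (real^3) set" where
  "arr_complement S = S2 - (\<Union>s\<in>S. dual_line s)"

definition is_cell :: "(real \<times> real) set \<Rightarrow> (real^3) set \<Rightarrow> bool" where
  "is_cell S D \<longleftrightarrow>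
     (\<exists>x \<in> arr_complement S.
        D = closure (connected_component_set (arr_complement S) x)
            \<union> uminus ` closure (connected_component_set (arr_complement S) x))"

definition vertical_infinity :: "real^3" where
  "vertical_infinity = vector [0, 1, 0]"

definition marked_cell :: "(real \<times> real) set \<Rightarrow> (real^3) set \<Rightarrow> bool" where
  "marked_cell S D \<longleftrightarrow> is_cell S D \<and> vertical_infinity \<in> D"

text \<open>Lines of the arrangement contributing a side to a cell (a side is a non-degenerate
  segment of the boundary of the cell lying on the line).\<close>

definition bounding_lines :: "(real \<times> real) set \<Rightarrow> (real^3) set \<Rightarrow> (real \<times> real) set" where
  "bounding_lines S D = {s \<in> S. infinite (D \<inter> dual_line s)}"

definition triangular_cell ::
    "(real \<times> real) set \<Rightarrow> (real^3) set \<Rightarrow> real \<times> real \<Rightarrow> real \<times> real \<Rightarrow> real \<times> real \<Rightarrow> bool" where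
  "triangular_cell S D a b c \<longleftrightarrow> is_cell S D \<and> bounding_lines S D = {a, b, c}"

text \<open>The intersection point of two dual lines (one representative on the sphere).\<close>

definition meet :: "real \<times> real \<Rightarrow> real \<times> real \<Rightarrow> real^3" where
  "meet a b = (1 / norm (cross3 (dual_normal a) (dual_normal b))) *\<^sub>R (cross3 (dual_normal a) (dual_normal b))"

text \<open>Orientation of the dual line of s: moving from a point v of the line by angle t
  along the great circle, in the direction which in the affine chart corresponds to
  increasing x (one checks that the tangent v cross n has positive x-speed in the chart).\<close>

definition move_along :: "real \<times> real \<Rightarrow> real^3 \<Rightarrow> real \<Rightarrow> real^3" where
  "move_along s v t =
     cos t *\<^sub>R v + (sin t / norm (dual_normal s)) *\<^sub>R (cross3 v (dual_normal s))"

definition side_into :: "(real^3) set \<Rightarrow> real \<times> real \<Rightarrow> real^3 \<Rightarrow> bool" where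
  "side_into D s v \<longleftrightarrow>
     (\<exists>e>0. \<forall>t. 0 < t \<and> t < e \<longrightarrow> move_along s v (-t) \<in> D) \<and>
     \<not> (\<exists>e>0. \<forall>t. 0 < t \<and> t < e \<longrightarrow> move_along s v t \<in> D)"

definition side_out_of :: "(real^3) set \<Rightarrow> real \<times> real \<Rightarrow> real^3 \<Rightarrow> bool" where
  "side_out_of D s v \<longleftrightarrow>
     (\<exists>e>0. \<forall>t. 0 < t \<and> t < e \<longrightarrow> move_along s v t \<in> D) \<and>
     \<not> (\<exists>e>0. \<forall>t. 0 < t \<and> t < e \<longrightarrow> move_along s v (-t) \<in> D)"

text \<open>A vertex of D with one incident side directed into it and the other directed out
  of it.  The exit vertex of a triangular non-marked cell is the unique such vertex.\<close>

definition in_out_vertex :: "(real \<times> real) set \<Rightarrow> (real^3) set \<Rightarrow> real^3 \<Rightarrow> bool" where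
  "in_out_vertex S D v \<longleftrightarrow>
     v \<in> D \<and>
     (\<exists>s\<in>bounding_lines S D. \<exists>t\<in>bounding_lines S D. s \<noteq> t \<and>
        v \<in> dual_line s \<and> v \<in> dual_line t \<and> side_into D s v \<and> side_out_of D t v)"

definition is_exit_vertex :: "(real \<times> real) set \<Rightarrow> (real^3) set \<Rightarrow> real^3 \<Rightarrow> bool" where
  "is_exit_vertex S D v \<longleftrightarrow>
     in_out_vertex S D v \<and> (\<forall>w. in_out_vertex S D w \<longrightarrow> w = v \<or> w = - v)"

definition is_witness_line :: "(real \<times> real) set \<Rightarrow> (real^3) set \<Rightarrow> real \<times> real \<Rightarrow> bool" where
  "is_witness_line S D c \<longleftrightarrow>
     c \<in> bounding_lines S D \<and> (\<exists>v. is_exit_vertex S D v \<and> v \<notin> dual_line c)"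

end

theory Submission
  imports Defs
begin


abbreviation nn :: "real \<times> real \<Rightarrow> real^3" where "nn s \<equiv> dual_normal s"

definition Kx :: "(real \<times> real) set \<Rightarrow> real^3 \<Rightarrow> (real^3) set" where
  "Kx S x = {v \<in> S2. \<forall>s\<in>S. (nn s \<bullet> v) * (nn s \<bullet> x) \<ge> 0}"

definition Ox :: "(real \<times> real) set \<Rightarrow> real^3 \<Rightarrow> (real^3) set" where
  "Ox S x = {v \<in> S2. \<forall>s\<in>S. (nn s \<bullet> v) * (nn s \<bullet> x) > 0}"

lemma arr_compl_iff: "x \<in> arr_complement S \<longleftrightarrow> x \<in> S2 \<and> (\<forall>s\<in>S. nn s \<bullet> x \<noteq> 0)"
  unfolding arr_complement_def dual_line_def by (auto simp: inner_commute[of x])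

lemma S2_iff: "v \<in> S2 \<longleftrightarrow> norm v = 1"
  by (simp add: S2_def)

lemma Ox_sub: "Ox S x \<subseteq> arr_complement S"
proof
  fix v assume v: "v \<in> Ox S x"
  have "\<forall>s\<in>S. nn s \<bullet> v \<noteq> 0" using v unfolding Ox_def
    by (metis (mono_tags) mem_Collect_eq mult_zero_left less_irrefl)
  then show "v \<in> arr_complement S" using v by (simp add: Ox_def arr_compl_iff)
qed

lemma Ox_connected:
  assumes "a \<in> S"
  shows "connected (Ox S x)"
proof -
  define Oc where "Oc = (\<Inter>s\<in>S. {v. inner ((nn s \<bullet> x) *\<^sub>R nn s) v > 0})"
  have cv: "convex Oc" unfolding Oc_def by (intro convex_INT ballI convex_halfspace_gt)
  have nz: "v \<noteq> 0" if "v \<in> Oc" for v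
    using that assms by (auto simp: Oc_def)
  have cont: "continuous_on Oc (\<lambda>v. inverse (norm v) *\<^sub>R v)"
    by (intro continuous_intros) (auto dest: nz)
  have eq: "(\<lambda>v. inverse (norm v) *\<^sub>R v) ` Oc = Ox S x"
  proof
    show "(\<lambda>v. inverse (norm v) *\<^sub>R v) ` Oc \<subseteq> Ox S x"
    proof
      fix w assume "w \<in> (\<lambda>v. inverse (norm v) *\<^sub>R v) ` Oc"
      then obtain v where v: "v \<in> Oc" and w: "w = inverse (norm v) *\<^sub>R v" by auto
      have np: "norm v > 0" using nz[OF v] by simp
      have "norm w = 1" using np by (simp add: w)
      moreover have "(nn s \<bullet> w) * (nn s \<bullet> x) > 0" if "s \<in> S" for s
      proof -
        have "(nn s \<bullet> v) * (nn s \<bullet> x) > 0" using v that by (auto simp: Oc_def algebra_simps)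
        then have "0 < inverse (norm v) * ((nn s \<bullet> v) * (nn s \<bullet> x))" using np by simp
        then show ?thesis by (simp add: w algebra_simps)
      qed
      ultimately show "w \<in> Ox S x" by (auto simp: Ox_def S2_iff)
    qed
  next
    show "Ox S x \<subseteq> (\<lambda>v. inverse (norm v) *\<^sub>R v) ` Oc"
    proof
      fix w assume w: "w \<in> Ox S x"
      then have "norm w = 1" by (simp add: Ox_def S2_iff)
      moreover have "w \<in> Oc" using w by (auto simp: Ox_def Oc_def algebra_simps)
      ultimately show "w \<in> (\<lambda>v. inverse (norm v) *\<^sub>R v) ` Oc"
        by (intro image_eqI[where x=w]) auto
    qed
  qed
  show ?thesis
    using connected_continuous_image[OF cont convex_connected[OF cv]] eq by simp
qed

lemma component_eq:
  assumes "a \<in> S" and x: "x \<in> arr_complement S"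
  shows "connected_component_set (arr_complement S) x = Ox S x"
proof
  have "\<forall>s\<in>S. 0 < (nn s \<bullet> x) * (nn s \<bullet> x)" using x unfolding arr_compl_iff
    by (metis not_real_square_gt_zero)
  then have xO: "x \<in> Ox S x" using x by (simp add: arr_compl_iff Ox_def)
  show "Ox S x \<subseteq> connected_component_set (arr_complement S) x"
    by (rule connected_component_maximal[OF xO Ox_connected[OF assms(1)] Ox_sub])
next
  show "connected_component_set (arr_complement S) x \<subseteq> Ox S x"
  proof
    fix v assume v: "v \<in> connected_component_set (arr_complement S) x"
    let ?C = "connected_component_set (arr_complement S) x"
    have Csub: "?C \<subseteq> arr_complement S" by (rule connected_component_subset)
    have vA: "v \<in> arr_complement S" using v Csub by auto
    have xC: "x \<in> ?C" using x by simp
    have "(nn s \<bullet> v) * (nn s \<bullet> x) > 0" if s: "s \<in> S" for s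
    proof (rule ccontr)
      assume "\<not> ?thesis"
      then have neg: "(nn s \<bullet> v) * (nn s \<bullet> x) < 0"
        using vA x s by (auto simp: arr_compl_iff) (metis mult_eq_0_iff linorder_neqE_linordered_idom)
      have "\<exists>z\<in>?C. inner (nn s) z = 0"
      proof (cases "nn s \<bullet> v \<le> 0")
        case True
        then have "0 \<le> nn s \<bullet> x" using neg by (auto simp: mult_less_0_iff)
        then show ?thesis using connected_ivt_hyperplane[OF connected_connected_component v xC, of "nn s" 0] True by auto
      next
        case False
        then have "nn s \<bullet> x \<le> 0" using neg by (auto simp: mult_less_0_iff)
        then show ?thesis using connected_ivt_hyperplane[OF connected_connected_component xC v, of "nn s" 0] False by auto
      qed
      then obtain z where "z \<in> ?C" "nn s \<bullet> z = 0" by auto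
      then show False using Csub s by (auto simp: arr_compl_iff)
    qed
    then show "v \<in> Ox S x" using vA by (auto simp: Ox_def arr_compl_iff)
  qed
qed

lemma Kx_closed: "closed (Kx S x)"
proof -
  have "Kx S x = S2 \<inter> (\<Inter>s\<in>S. {v. inner ((nn s \<bullet> x) *\<^sub>R nn s) v \<ge> 0})"
    by (auto simp: Kx_def mult.commute)
  also have "closed \<dots>"
    unfolding S2_def by (intro closed_Int closed_INT closed_sphere ballI closed_halfspace_ge)
  finally show ?thesis .
qed

lemma closure_Ox:
  assumes x: "x \<in> arr_complement S"
  shows "closure (Ox S x) = Kx S x"
proof
  show "closure (Ox S x) \<subseteq> Kx S x"
    by (rule closure_minimal[OF _ Kx_closed]) (auto simp: Ox_def Kx_def less_imp_le)
next
  have nx: "norm x = 1" using x by (simp add: arr_compl_iff S2_iff)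
  show "Kx S x \<subseteq> closure (Ox S x)"
  proof
    fix v assume v: "v \<in> Kx S x"
    have nv: "norm v = 1" using v by (simp add: Kx_def S2_iff)
    show "v \<in> closure (Ox S x)"
      unfolding closure_approachable
    proof (intro allI impI)
      fix e :: real assume e: "e > 0"
      define \<epsilon> where "\<epsilon> = min (1/2) (e/3)"
      have ep: "\<epsilon> > 0" "\<epsilon> \<le> 1/2" "\<epsilon> < e/2" using e by (auto simp: \<epsilon>_def)
      define w where "w = v + \<epsilon> *\<^sub>R x"
      have wv: "norm (w - v) = \<epsilon>" using ep nx by (simp add: w_def)
      have nwd: "\<bar>norm w - 1\<bar> \<le> \<epsilon>"
        using norm_triangle_ineq3[of w v] wv nv by simp
      have nwp: "norm w > 0" using nwd ep by linarith
      define y where "y = inverse (norm w) *\<^sub>R w"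
      have ny: "norm y = 1" using nwp by (simp add: y_def)
      have "(nn s \<bullet> y) * (nn s \<bullet> x) > 0" if s: "s \<in> S" for s
      proof -
        have a1: "(nn s \<bullet> v) * (nn s \<bullet> x) \<ge> 0" using v s by (auto simp: Kx_def)
        have a2: "nn s \<bullet> x \<noteq> 0" using x s by (auto simp: arr_compl_iff)
        have "(nn s \<bullet> w) * (nn s \<bullet> x) = (nn s \<bullet> v) * (nn s \<bullet> x) + \<epsilon> * (nn s \<bullet> x)^2"
          by (simp add: w_def inner_add_right algebra_simps power2_eq_square)
        also have "\<dots> > 0" using a1 a2 ep by (simp add: add_nonneg_pos)
        finally have "0 < inverse (norm w) * ((nn s \<bullet> w) * (nn s \<bullet> x))" using nwp by simp
        then show ?thesis by (simp add: y_def algebra_simps)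
      qed
      then have yO: "y \<in> Ox S x" using ny by (auto simp: Ox_def S2_iff)
      have "y - w = (inverse (norm w) - 1) *\<^sub>R w" by (simp add: y_def algebra_simps)
      then have "norm (y - w) = \<bar>inverse (norm w) - 1\<bar> * norm w" by simp
      also have "\<dots> = \<bar>(inverse (norm w) - 1) * norm w\<bar>" by (simp add: abs_mult)
      also have "(inverse (norm w) - 1) * norm w = 1 - norm w" using nwp by (simp add: field_simps)
      finally have "norm (y - w) \<le> \<epsilon>" using nwd by simp
      then have "norm (y - v) \<le> 2 * \<epsilon>"
        using norm_triangle_ineq[of "y - w" "w - v"] wv by simp
      then have "dist y v < e" using ep by (simp add: dist_norm)
      then show "\<exists>y\<in>Ox S x. dist y v < e" using yO by auto
    qed
  qed
qed

lemma Kx_uminus: "v \<in> Kx S x \<Longrightarrow> v \<in> S2"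
  by (simp add: Kx_def)

lemma is_cell_iff:
  assumes "a \<in> S"
  shows "is_cell S D \<longleftrightarrow> (\<exists>x\<in>arr_complement S. D = Kx S x \<union> uminus ` Kx S x)"
  unfolding is_cell_def using component_eq[OF assms] closure_Ox by auto



lemma trip: "inner (cross3 (nn s) (nn t)) (nn r) = - orient s t r"
  by (simp add: cross3_simps dual_normal_def orient_def)

lemma nn_ne: "nn s \<noteq> 0"
proof
  assume "nn s = 0"
  then have "(nn s)$2 = 0" by simp
  then show False by (simp add: dual_normal_def)
qed

lemma cross_ne: assumes "s \<noteq> t" shows "cross3 (nn s) (nn t) \<noteq> 0"
proof
  assume h: "cross3 (nn s) (nn t) = 0"
  have "(cross3 (nn s) (nn t))$1 = 0" "(cross3 (nn s) (nn t))$3 = 0" using h by simp_all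
  then have "fst s = fst t" "snd s = snd t"
    by (simp_all add: cross_components dual_normal_def)
  then show False using assms by (simp add: prod_eq_iff)
qed

lemma gp_orient: "general_position S \<Longrightarrow> s \<in> S \<Longrightarrow> t \<in> S \<Longrightarrow> r \<in> S \<Longrightarrow> s \<noteq> t \<Longrightarrow> s \<noteq> r \<Longrightarrow> t \<noteq> r
   \<Longrightarrow> orient s t r \<noteq> 0"
  by (simp add: general_position_def)

lemma perp2:
  fixes v :: "real^3"
  assumes "nn s \<bullet> v = 0" "nn t \<bullet> v = 0"
  shows "(cross3 (nn s) (nn t) \<bullet> cross3 (nn s) (nn t)) *\<^sub>R v = (v \<bullet> cross3 (nn s) (nn t)) *\<^sub>R cross3 (nn s) (nn t)"
proof -
  let ?u = "cross3 (nn s) (nn t)"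
  have "cross3 v ?u = 0" using assms by (simp add: Lagrange inner_commute)
  then have "cross3 ?u v = 0" by (metis cross_skew neg_equal_0_iff_equal)
  then have "cross3 ?u (cross3 ?u v) = 0" by simp
  then show ?thesis by (simp add: Lagrange inner_commute)
qed

lemma gp_third:
  assumes gp: "general_position S" and s: "s \<in> S" and t: "t \<in> S" and r: "r \<in> S"
    and d: "s \<noteq> t" "s \<noteq> r" "t \<noteq> r"
    and z: "z \<noteq> 0" "nn s \<bullet> z = 0" "nn t \<bullet> z = 0"
  shows "nn r \<bullet> z \<noteq> 0"
proof
  assume zr: "nn r \<bullet> z = 0"
  let ?u = "cross3 (nn s) (nn t)"
  have e: "(?u \<bullet> ?u) *\<^sub>R z = (z \<bullet> ?u) *\<^sub>R ?u" by (rule perp2[OF z(2,3)])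
  have "?u \<noteq> 0" using cross_ne d by auto
  then have "?u \<bullet> ?u \<noteq> 0" by simp
  then have "(?u \<bullet> ?u) *\<^sub>R z \<noteq> 0" using z by simp
  then have zu: "z \<bullet> ?u \<noteq> 0" using e by auto
  have "nn r \<bullet> ((?u \<bullet> ?u) *\<^sub>R z) = 0" using zr by simp
  then have "(z \<bullet> ?u) * (nn r \<bullet> ?u) = 0" using e by simp
  then have "?u \<bullet> nn r = 0" using zu by (simp add: inner_commute)
  then have "orient s t r = 0" using trip[of s t r] by simp
  then show False using gp_orient[OF gp s t r d] by simp
qed

lemma facet:
  assumes fin: "finite S" and gp: "general_position S" and x: "x \<in> arr_complement S"
    and z: "z \<noteq> 0" and cone: "\<forall>s\<in>S. (nn s \<bullet> z) * (nn s \<bullet> x) \<ge> 0"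
    and s0: "s0 \<in> S" and z0: "nn s0 \<bullet> z = 0"
  shows "infinite (Kx S x \<inter> dual_line s0)"
proof -
  have xs: "\<forall>s\<in>S. nn s \<bullet> x \<noteq> 0" and nx: "x \<in> S2" using x by (auto simp: arr_compl_iff)
  obtain d where d: "d \<noteq> 0" "z \<bullet> d = 0" "nn s0 \<bullet> d = 0"
    and dS: "\<forall>s\<in>S. nn s \<bullet> z = 0 \<longrightarrow> (nn s \<bullet> d) * (nn s \<bullet> x) \<ge> 0"
  proof (cases "\<exists>s1\<in>S. s1 \<noteq> s0 \<and> nn s1 \<bullet> z = 0")
    case True
    then obtain s1 where s1: "s1 \<in> S" "s1 \<noteq> s0" "nn s1 \<bullet> z = 0" by auto
    let ?n0 = "nn s0" and ?n1 = "nn s1"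
    define \<sigma> where "\<sigma> = sgn (?n1 \<bullet> x)"
    define d where "d = \<sigma> *\<^sub>R ((?n0 \<bullet> ?n0) *\<^sub>R ?n1 - (?n0 \<bullet> ?n1) *\<^sub>R ?n0)"
    have d1: "z \<bullet> d = 0" using z0 s1(3)
      by (simp add: d_def inner_diff_right inner_commute)
    have d2: "?n0 \<bullet> d = 0"
      by (simp add: d_def inner_diff_right inner_commute)
    have nc: "(norm (cross3 ?n0 ?n1))\<^sup>2 = (norm ?n0)\<^sup>2 * (norm ?n1)\<^sup>2 - (?n0 \<bullet> ?n1)\<^sup>2"
      by (rule norm_cross)
    have "cross3 ?n0 ?n1 \<noteq> 0" using cross_ne s1(2) by metis
    then have "(norm (cross3 ?n0 ?n1))\<^sup>2 > 0" by simp
    then have "(norm ?n0)\<^sup>2 * (norm ?n1)\<^sup>2 - (?n0 \<bullet> ?n1)\<^sup>2 > 0" using nc by simp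
    moreover have "(?n0 \<bullet> ?n0) * (?n1 \<bullet> ?n1) - (?n0 \<bullet> ?n1) * (?n0 \<bullet> ?n1) = (norm ?n0)\<^sup>2 * (norm ?n1)\<^sup>2 - (?n0 \<bullet> ?n1)\<^sup>2"
      by (simp only: power2_norm_eq_inner) (simp only: power2_eq_square)
    ultimately have pos: "(?n0 \<bullet> ?n0) * (?n1 \<bullet> ?n1) - (?n0 \<bullet> ?n1) * (?n0 \<bullet> ?n1) > 0"
      by simp
    have n1d: "?n1 \<bullet> d = \<sigma> * ((?n0 \<bullet> ?n0) * (?n1 \<bullet> ?n1) - (?n0 \<bullet> ?n1) * (?n0 \<bullet> ?n1))"
      by (simp add: d_def inner_diff_right inner_commute algebra_simps)
    have ab: "\<sigma> * (?n1 \<bullet> x) = \<bar>?n1 \<bullet> x\<bar>" by (simp add: \<sigma>_def abs_sgn)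
    have "(?n1 \<bullet> d) * (?n1 \<bullet> x) = ((?n0 \<bullet> ?n0) * (?n1 \<bullet> ?n1) - (?n0 \<bullet> ?n1) * (?n0 \<bullet> ?n1)) * (\<sigma> * (?n1 \<bullet> x))"
      unfolding n1d by (simp only: mult_ac)
    also have "\<dots> > 0" unfolding ab using pos xs s1(1) by simp
    finally have d3: "(?n1 \<bullet> d) * (?n1 \<bullet> x) > 0" .
    have dne: "d \<noteq> 0" using d3 by auto
    have "\<forall>s\<in>S. nn s \<bullet> z = 0 \<longrightarrow> (nn s \<bullet> d) * (nn s \<bullet> x) \<ge> 0"
    proof (intro ballI impI)
      fix s assume s: "s \<in> S" "nn s \<bullet> z = 0"
      have "s = s0 \<or> s = s1"
        using gp_third[OF gp s0 s1(1) s(1) _ _ _ z z0 s1(3)] s1(2) s(2) by auto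
      then show "(nn s \<bullet> d) * (nn s \<bullet> x) \<ge> 0" using d2 d3 by auto
    qed
    then show ?thesis using that dne d1 d2 by blast
  next
    case False
    define d where "d = cross3 z (nn s0)"
    have d1: "z \<bullet> d = 0" "nn s0 \<bullet> d = 0" by (simp_all add: d_def dot_cross_self)
    have "(norm d)\<^sup>2 = (norm z)\<^sup>2 * (norm (nn s0))\<^sup>2 - (z \<bullet> nn s0)\<^sup>2"
      unfolding d_def by (rule norm_cross)
    then have "(norm d)\<^sup>2 > 0" using z nn_ne[of s0] z0 by (simp add: inner_commute)
    then have "d \<noteq> 0" by auto
    moreover have "\<forall>s\<in>S. nn s \<bullet> z = 0 \<longrightarrow> (nn s \<bullet> d) * (nn s \<bullet> x) \<ge> 0"
      using False d1 by auto
    ultimately show ?thesis using that d1 by blast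
  qed
  have ev: "\<forall>\<^sub>F \<epsilon> in at_right 0. \<forall>s\<in>S. (nn s \<bullet> (z + \<epsilon> *\<^sub>R d)) * (nn s \<bullet> x) \<ge> 0"
  proof (rule eventually_ball_finite[OF fin], intro ballI)
    fix s assume s: "s \<in> S"
    have eq: "\<And>\<epsilon>. (nn s \<bullet> (z + \<epsilon> *\<^sub>R d)) * (nn s \<bullet> x) = (nn s \<bullet> z) * (nn s \<bullet> x) + \<epsilon> * ((nn s \<bullet> d) * (nn s \<bullet> x))"
      by (simp add: inner_add_right algebra_simps)
    show "\<forall>\<^sub>F \<epsilon> in at_right 0. (nn s \<bullet> (z + \<epsilon> *\<^sub>R d)) * (nn s \<bullet> x) \<ge> 0"
    proof (cases "nn s \<bullet> z = 0")
      case True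
      then have "(nn s \<bullet> d) * (nn s \<bullet> x) \<ge> 0" using dS s by auto
      then show ?thesis using eventually_at_right_less[of 0] unfolding eq
        by (auto elim!: eventually_mono simp: True)
    next
      case False
      then have p: "(nn s \<bullet> z) * (nn s \<bullet> x) > 0" using cone s xs
        by (metis less_eq_real_def mult_eq_0_iff)
      have "((\<lambda>\<epsilon>. (nn s \<bullet> z) * (nn s \<bullet> x) + \<epsilon> * ((nn s \<bullet> d) * (nn s \<bullet> x))) \<longlongrightarrow>
            (nn s \<bullet> z) * (nn s \<bullet> x) + 0 * ((nn s \<bullet> d) * (nn s \<bullet> x))) (at_right 0)"
        by (intro tendsto_intros)
      then have "\<forall>\<^sub>F \<epsilon> in at_right 0. 0 < (nn s \<bullet> z) * (nn s \<bullet> x) + \<epsilon> * ((nn s \<bullet> d) * (nn s \<bullet> x))"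
        using p by (intro order_tendstoD(1)) auto
      then show ?thesis unfolding eq by (auto elim!: eventually_mono)
    qed
  qed
  then obtain b where b: "b > 0" and bS: "\<And>\<epsilon>. 0 < \<epsilon> \<Longrightarrow> \<epsilon> < b \<Longrightarrow> \<forall>s\<in>S. (nn s \<bullet> (z + \<epsilon> *\<^sub>R d)) * (nn s \<bullet> x) \<ge> 0"
    unfolding eventually_at_right_field by auto
  define f where "f = (\<lambda>\<epsilon>::real. inverse (norm (z + \<epsilon> *\<^sub>R d)) *\<^sub>R (z + \<epsilon> *\<^sub>R d))"
  have zz: "z \<bullet> (z + \<epsilon> *\<^sub>R d) = z \<bullet> z" for \<epsilon> using d by (simp add: inner_add_right)
  have nzd: "z + \<epsilon> *\<^sub>R d \<noteq> 0" for \<epsilon>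
  proof
    assume "z + \<epsilon> *\<^sub>R d = 0"
    then have "z \<bullet> (z + \<epsilon> *\<^sub>R d) = 0" by simp
    then show False using zz z by simp
  qed
  have img: "f ` {0<..<b} \<subseteq> Kx S x \<inter> dual_line s0"
  proof
    fix y assume "y \<in> f ` {0<..<b}"
    then obtain \<epsilon> where e: "0 < \<epsilon>" "\<epsilon> < b" and y: "y = f \<epsilon>" by auto
    have np: "norm (z + \<epsilon> *\<^sub>R d) > 0" using nzd by simp
    have ny: "norm y = 1" using np by (simp add: y f_def)
    have "(nn s \<bullet> y) * (nn s \<bullet> x) \<ge> 0" if s: "s \<in> S" for s
    proof -
      have "(nn s \<bullet> (z + \<epsilon> *\<^sub>R d)) * (nn s \<bullet> x) \<ge> 0" using bS[OF e] s by auto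
      then have "0 \<le> inverse (norm (z + \<epsilon> *\<^sub>R d)) * ((nn s \<bullet> (z + \<epsilon> *\<^sub>R d)) * (nn s \<bullet> x))"
        using np by simp
      then show ?thesis by (simp add: y f_def algebra_simps)
    qed
    moreover have "y \<bullet> nn s0 = 0"
    proof -
      have "nn s0 \<bullet> (z + \<epsilon> *\<^sub>R d) = 0" using z0 d(3) by (simp add: inner_add_right)
      then have "nn s0 \<bullet> y = 0" by (simp add: y f_def)
      then show ?thesis by (simp add: inner_commute)
    qed
    ultimately show "y \<in> Kx S x \<inter> dual_line s0"
      using ny by (simp add: Kx_def dual_line_def S2_iff)
  qed
  have inj: "inj_on f {0<..<b}"
  proof (rule inj_onI)
    fix e1 e2 assume "e1 \<in> {0<..<b}" "e2 \<in> {0<..<b}" and eq: "f e1 = f e2"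
    let ?w1 = "z + e1 *\<^sub>R d" and ?w2 = "z + e2 *\<^sub>R d"
    have n1: "norm ?w1 > 0" "norm ?w2 > 0" using nzd by simp_all
    have "z \<bullet> f e1 = z \<bullet> f e2" using eq by simp
    then have "inverse (norm ?w1) * (z \<bullet> z) = inverse (norm ?w2) * (z \<bullet> z)"
      by (simp add: f_def zz)
    then have "inverse (norm ?w1) = inverse (norm ?w2)" using z by simp
    then have "norm ?w1 = norm ?w2" by simp
    then have "?w1 = ?w2" using eq n1 by (simp add: f_def)
    then have "e1 *\<^sub>R d = e2 *\<^sub>R d" by simp
    then show "e1 = e2" using d(1) by (simp add: scaleR_cancel_right)
  qed
  have "infinite (f ` {0<..<b})" using inj b by (simp add: finite_image_iff)
  then show ?thesis using img infinite_super by blast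
qed

lemma bounding_lines_eq:
  "bounding_lines S (Kx S x \<union> uminus ` Kx S x) = {s\<in>S. infinite (Kx S x \<inter> dual_line s)}"
proof -
  have "uminus ` Kx S x \<inter> dual_line s = uminus ` (Kx S x \<inter> dual_line s)" for s
    by (auto simp: dual_line_def S2_def)
  moreover have "finite (uminus ` A) \<longleftrightarrow> finite A" for A :: "(real^3) set"
    by (simp add: finite_image_iff)
  ultimately show ?thesis
    by (auto simp: bounding_lines_def Int_Un_distrib2)
qed



lemma prod_pos_disj: "A * B > (0::real) \<Longrightarrow> (A \<ge> 0 \<and> B \<ge> 0) \<or> (A \<le> 0 \<and> B \<le> 0)"
  by (auto simp: zero_less_mult_iff)

lemma side_real:
  fixes \<beta> :: "real \<Rightarrow> real" and k X Y :: real
  assumes k: "k \<noteq> 0" and X: "X \<noteq> 0" and Y: "Y \<noteq> 0"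
    and cont: "isCont \<beta> 0" and b0: "\<beta> 0 \<noteq> 0"
  shows "(\<exists>e>0. \<forall>\<tau>. 0 < \<tau> \<and> \<tau> < e \<longrightarrow>
            ((sin \<tau> * k * X \<ge> 0 \<and> \<beta> \<tau> * Y \<ge> 0) \<or> (sin \<tau> * k * X \<le> 0 \<and> \<beta> \<tau> * Y \<le> 0)))
         \<longleftrightarrow> k * X * \<beta> 0 * Y > 0"
proof -
  have "((\<lambda>\<tau>. \<beta> \<tau> * \<beta> 0) \<longlongrightarrow> \<beta> 0 * \<beta> 0) (at 0)"
    using cont by (intro tendsto_intros) (simp add: isCont_def)
  moreover have "\<beta> 0 * \<beta> 0 > 0" using b0 by (metis linorder_neqE_linordered_idom mult_neg_neg mult_pos_pos)
  ultimately have "\<forall>\<^sub>F \<tau> in at 0. \<beta> \<tau> * \<beta> 0 > 0"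
    by (intro order_tendstoD(1)) auto
  then obtain \<delta> where \<delta>: "\<delta> > 0" and d: "\<And>\<tau>. \<tau> \<noteq> 0 \<Longrightarrow> dist \<tau> 0 < \<delta> \<Longrightarrow> \<beta> \<tau> * \<beta> 0 > 0"
    unfolding eventually_at by auto
  define P where "P = (\<lambda>\<tau>. (sin \<tau> * k * X \<ge> 0 \<and> \<beta> \<tau> * Y \<ge> 0) \<or> (sin \<tau> * k * X \<le> 0 \<and> \<beta> \<tau> * Y \<le> 0))"
  have key: "(sin \<tau> * k * X) * (\<beta> \<tau> * Y) * (\<beta> 0 * \<beta> 0) = sin \<tau> * (\<beta> \<tau> * \<beta> 0) * (k * X * \<beta> 0 * Y)" for \<tau>
    by (simp add: algebra_simps)
  have key2: "(sin \<tau> * k * X) * (\<beta> \<tau> * Y) * (\<beta> \<tau> * \<beta> 0) = (sin \<tau> * (\<beta> \<tau> * \<beta> \<tau>)) * (k * X * \<beta> 0 * Y)" for \<tau>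
    by (simp add: algebra_simps)
  have b00: "\<beta> 0 * \<beta> 0 > 0" using b0 by (metis linorder_neqE_linordered_idom mult_neg_neg mult_pos_pos)
  show ?thesis
  proof
    assume "\<exists>e>0. \<forall>\<tau>. 0 < \<tau> \<and> \<tau> < e \<longrightarrow> ((sin \<tau> * k * X \<ge> 0 \<and> \<beta> \<tau> * Y \<ge> 0) \<or> (sin \<tau> * k * X \<le> 0 \<and> \<beta> \<tau> * Y \<le> 0))"
    then obtain e where e: "e > 0" and pe: "\<And>\<tau>. 0 < \<tau> \<Longrightarrow> \<tau> < e \<Longrightarrow> P \<tau>" unfolding P_def by auto
    define \<tau> where "\<tau> = min e (min \<delta> pi) / 2"
    have "min e (min \<delta> pi) \<le> pi" "min e (min \<delta> pi) \<le> e" "min e (min \<delta> pi) \<le> \<delta>" "min e (min \<delta> pi) > 0"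
      using e \<delta> pi_gt_zero by auto
    then have t: "0 < \<tau>" "\<tau> < e" "\<tau> < \<delta>" "\<tau> < pi" unfolding \<tau>_def by linarith+
    have s: "sin \<tau> > 0" using t by (simp add: sin_gt_zero)
    have bb: "\<beta> \<tau> * \<beta> 0 > 0" using d[of \<tau>] t by simp
    then have bt: "\<beta> \<tau> \<noteq> 0" by auto
    have A: "sin \<tau> * k * X \<noteq> 0" using s k X by simp
    have B: "\<beta> \<tau> * Y \<noteq> 0" using bt Y by simp
    have "(sin \<tau> * k * X) * (\<beta> \<tau> * Y) \<ge> 0" using pe[OF t(1,2)] unfolding P_def
      by (auto intro: mult_nonneg_nonneg mult_nonpos_nonpos)
    then have AB: "(sin \<tau> * k * X) * (\<beta> \<tau> * Y) > 0" using A B by (simp add: less_le)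
    have "(sin \<tau> * (\<beta> \<tau> * \<beta> \<tau>)) * (k * X * \<beta> 0 * Y) > 0"
      using key2[of \<tau>] AB bb by (metis mult_pos_pos)
    moreover have "sin \<tau> * (\<beta> \<tau> * \<beta> \<tau>) > 0" using s bt by (metis not_real_square_gt_zero mult_pos_pos)
    ultimately show "k * X * \<beta> 0 * Y > 0" by (simp add: zero_less_mult_iff)
  next
    assume pos: "k * X * \<beta> 0 * Y > 0"
    show "\<exists>e>0. \<forall>\<tau>. 0 < \<tau> \<and> \<tau> < e \<longrightarrow> ((sin \<tau> * k * X \<ge> 0 \<and> \<beta> \<tau> * Y \<ge> 0) \<or> (sin \<tau> * k * X \<le> 0 \<and> \<beta> \<tau> * Y \<le> 0))"
    proof (intro exI[of _ "min \<delta> pi"] conjI allI impI)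
      show "min \<delta> pi > 0" using \<delta> pi_gt_zero by simp
      fix \<tau> assume t: "0 < \<tau> \<and> \<tau> < min \<delta> pi"
      have s: "sin \<tau> > 0" using t by (simp add: sin_gt_zero)
      have bb: "\<beta> \<tau> * \<beta> 0 > 0" using d[of \<tau>] t by simp
      have "sin \<tau> * (\<beta> \<tau> * \<beta> 0) * (k * X * \<beta> 0 * Y) > 0" using s bb pos by simp
      then have "(sin \<tau> * k * X) * (\<beta> \<tau> * Y) * (\<beta> 0 * \<beta> 0) > 0" by (simp only: key)
      then have "(sin \<tau> * k * X) * (\<beta> \<tau> * Y) > 0" using b00 by (simp add: zero_less_mult_iff)
      then show "(sin \<tau> * k * X \<ge> 0 \<and> \<beta> \<tau> * Y \<ge> 0) \<or> (sin \<tau> * k * X \<le> 0 \<and> \<beta> \<tau> * Y \<le> 0)"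
        by (rule prod_pos_disj)
    qed
  qed
qed

definition K3 :: "real^3 \<Rightarrow> real \<times> real \<Rightarrow> real \<times> real \<Rightarrow> real \<times> real \<Rightarrow> (real^3) set" where
  "K3 x s t r = {v \<in> S2. (nn s \<bullet> v) * (nn s \<bullet> x) \<ge> 0 \<and> (nn t \<bullet> v) * (nn t \<bullet> x) \<ge> 0 \<and> (nn r \<bullet> v) * (nn r \<bullet> x) \<ge> 0}"

lemma K3_perm: "K3 x s t r = K3 x t s r" "K3 x s t r = K3 x s r t" "K3 x s t r = K3 x r s t"
  by (auto simp: K3_def)

lemma move_norm:
  assumes w: "w \<in> S2" and ws: "nn s \<bullet> w = 0"
  shows "norm (move_along s w \<tau>) = 1"
proof -
  let ?n = "nn s"
  have nw: "w \<bullet> w = 1" using w by (simp add: S2_iff norm_eq_1)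
  have nn0: "norm ?n > 0" using nn_ne by simp
  have "(norm (cross3 w ?n))\<^sup>2 = (norm w)\<^sup>2 * (norm ?n)\<^sup>2 - (w \<bullet> ?n)\<^sup>2" by (rule norm_cross)
  then have cc: "cross3 w ?n \<bullet> cross3 w ?n = (norm ?n)\<^sup>2"
    using w ws by (simp add: S2_iff inner_commute power2_norm_eq_inner[symmetric])
  have "move_along s w \<tau> \<bullet> move_along s w \<tau> =
        (cos \<tau>)\<^sup>2 * (w \<bullet> w) + (sin \<tau> / norm ?n)\<^sup>2 * (cross3 w ?n \<bullet> cross3 w ?n)"
    by (simp add: move_along_def inner_add_left inner_add_right dot_cross_self inner_commute power2_eq_square algebra_simps)
  also have "\<dots> = (cos \<tau>)\<^sup>2 + (sin \<tau>)\<^sup>2" using nw cc nn0 by (simp add: power_divide)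
  also have "\<dots> = 1" by simp
  finally show ?thesis by (simp add: norm_eq_sqrt_inner)
qed

lemma move_inner:
  "nn u \<bullet> move_along s w \<tau> = cos \<tau> * (nn u \<bullet> w) + sin \<tau> / norm (nn s) * (nn u \<bullet> cross3 w (nn s))"
  by (simp add: move_along_def inner_add_right)

lemma move_minus: "move_along s (-w) \<tau> = - move_along s w \<tau>"
  by (simp add: move_along_def)

lemma side_geom:
  assumes w: "w \<in> S2" and ws: "nn s \<bullet> w = 0" and wt: "nn t \<bullet> w = 0"
    and \<kappa>: "nn t \<bullet> cross3 w (nn s) \<noteq> 0" and q: "nn r \<bullet> w \<noteq> 0"
    and X: "nn t \<bullet> x \<noteq> 0" and Y: "nn r \<bullet> x \<noteq> 0"
    and D: "D = K3 x s t r \<union> uminus ` K3 x s t r"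
  shows "(\<exists>e>0. \<forall>\<tau>. 0 < \<tau> \<and> \<tau> < e \<longrightarrow> move_along s w \<tau> \<in> D) \<longleftrightarrow>
           (nn t \<bullet> cross3 w (nn s)) * (nn t \<bullet> x) * (nn r \<bullet> w) * (nn r \<bullet> x) > 0"
    and "(\<exists>e>0. \<forall>\<tau>. 0 < \<tau> \<and> \<tau> < e \<longrightarrow> move_along s w (-\<tau>) \<in> D) \<longleftrightarrow>
           (nn t \<bullet> cross3 w (nn s)) * (nn t \<bullet> x) * (nn r \<bullet> w) * (nn r \<bullet> x) < 0"
proof -
  let ?k = "nn t \<bullet> cross3 w (nn s) / norm (nn s)"
  have nn0: "norm (nn s) > 0" using nn_ne by simp
  have nn1: "norm (nn s) \<noteq> 0" using nn0 by linarith
  have mem: "move_along s w \<tau> \<in> D \<longleftrightarrow>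
     ((sin \<tau> * ?k * (nn t \<bullet> x) \<ge> 0 \<and> (nn r \<bullet> move_along s w \<tau>) * (nn r \<bullet> x) \<ge> 0) \<or>
      (sin \<tau> * ?k * (nn t \<bullet> x) \<le> 0 \<and> (nn r \<bullet> move_along s w \<tau>) * (nn r \<bullet> x) \<le> 0))" for \<tau>
  proof -
    have n1: "move_along s w \<tau> \<in> S2" using move_norm[OF w ws] by (simp add: S2_iff)
    have n2: "- move_along s w \<tau> \<in> S2" using move_norm[OF w ws] by (simp add: S2_iff)
    have i1: "nn s \<bullet> move_along s w \<tau> = 0" using ws by (simp add: move_inner dot_cross_self)
    have i2: "nn t \<bullet> move_along s w \<tau> = sin \<tau> * ?k" using wt by (simp add: move_inner)
    let ?m = "move_along s w \<tau>"
    have "?m \<in> uminus ` K3 x s t r \<longleftrightarrow> - ?m \<in> K3 x s t r"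
      by (metis (no_types, lifting) image_iff minus_minus)
    moreover have "?m \<in> K3 x s t r \<longleftrightarrow> (sin \<tau> * ?k * (nn t \<bullet> x) \<ge> 0 \<and> (nn r \<bullet> ?m) * (nn r \<bullet> x) \<ge> 0)"
      using n1 i1 i2 by (simp add: K3_def)
    moreover have "- ?m \<in> K3 x s t r \<longleftrightarrow> (sin \<tau> * ?k * (nn t \<bullet> x) \<le> 0 \<and> (nn r \<bullet> ?m) * (nn r \<bullet> x) \<le> 0)"
      using n2 i1 i2 by (simp add: K3_def inner_minus_right)
    ultimately show ?thesis unfolding D by blast
  qed
  have c1: "isCont (\<lambda>\<tau>. nn r \<bullet> move_along s w \<tau>) 0"
    unfolding move_inner using nn1 by (intro continuous_intros) auto
  have c2: "isCont (\<lambda>\<tau>. nn r \<bullet> move_along s w (-\<tau>)) 0"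
    unfolding move_inner using nn1 by (intro continuous_intros) auto
  have kk: "?k \<noteq> 0" using \<kappa> nn1 by simp
  have b0: "nn r \<bullet> move_along s w 0 = nn r \<bullet> w" by (simp add: move_inner)
  note R1 = side_real[OF kk X Y c1, unfolded b0, OF q]
  have eq1: "?k * (nn t \<bullet> x) * (nn r \<bullet> w) * (nn r \<bullet> x) = ((nn t \<bullet> cross3 w (nn s)) * (nn t \<bullet> x) * (nn r \<bullet> w) * (nn r \<bullet> x)) / norm (nn s)"
    by simp
  show "(\<exists>e>0. \<forall>\<tau>. 0 < \<tau> \<and> \<tau> < e \<longrightarrow> move_along s w \<tau> \<in> D) \<longleftrightarrow>
           (nn t \<bullet> cross3 w (nn s)) * (nn t \<bullet> x) * (nn r \<bullet> w) * (nn r \<bullet> x) > 0"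
    unfolding mem R1 eq1 using nn0 by (simp add: zero_less_divide_iff)
  have kk2: "- ?k \<noteq> 0" using kk by simp
  have q2: "nn r \<bullet> move_along s w (- 0) \<noteq> 0" using q b0 by simp
  note R2 = side_real[OF kk2 X Y c2 q2]
  have mem2: "move_along s w (-\<tau>) \<in> D \<longleftrightarrow>
     ((sin \<tau> * (- ?k) * (nn t \<bullet> x) \<ge> 0 \<and> (nn r \<bullet> move_along s w (-\<tau>)) * (nn r \<bullet> x) \<ge> 0) \<or>
      (sin \<tau> * (- ?k) * (nn t \<bullet> x) \<le> 0 \<and> (nn r \<bullet> move_along s w (-\<tau>)) * (nn r \<bullet> x) \<le> 0))" for \<tau>
    using mem[of "-\<tau>"] by simp
  show "(\<exists>e>0. \<forall>\<tau>. 0 < \<tau> \<and> \<tau> < e \<longrightarrow> move_along s w (-\<tau>) \<in> D) \<longleftrightarrow>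
           (nn t \<bullet> cross3 w (nn s)) * (nn t \<bullet> x) * (nn r \<bullet> w) * (nn r \<bullet> x) < 0"
    unfolding mem2 R2 using nn0 b0 by (simp add: zero_less_divide_iff divide_less_0_iff)
qed



lemma sign4:
  fixes P a b :: real
  assumes "P \<noteq> 0" "a \<noteq> 0" "b \<noteq> 0"
  shows "((P * b < 0 \<and> P * a < 0) \<or> (P * a > 0 \<and> P * b > 0)) \<longleftrightarrow> a * b > 0"
  using assms by (auto simp: zero_less_mult_iff mult_less_0_iff) 

lemma vertex:
  assumes gp: "general_position S" and s: "s \<in> S" and t: "t \<in> S" and r: "r \<in> S"
    and d: "s \<noteq> t" "s \<noteq> r" "t \<noteq> r"
    and w: "w \<in> S2" and ws: "nn s \<bullet> w = 0" and wt: "nn t \<bullet> w = 0"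
    and xs: "nn s \<bullet> x \<noteq> 0" and xt: "nn t \<bullet> x \<noteq> 0" and xr: "nn r \<bullet> x \<noteq> 0"
    and D: "D = K3 x s t r \<union> uminus ` K3 x s t r"
  shows "((side_into D s w \<and> side_out_of D t w) \<or> (side_into D t w \<and> side_out_of D s w))
          \<longleftrightarrow> (nn s \<bullet> x) * (nn t \<bullet> x) > 0"
proof -
  let ?u = "cross3 (nn s) (nn t)"
  define \<kappa> where "\<kappa> = w \<bullet> ?u"
  have w0: "w \<noteq> 0" using w by (auto simp: S2_iff)
  have k1: "nn t \<bullet> cross3 w (nn s) = \<kappa>"
    unfolding \<kappa>_def by (metis cross_triple inner_commute)
  have k2: "nn s \<bullet> cross3 w (nn t) = - \<kappa>"
    unfolding \<kappa>_def by (metis cross_triple inner_commute cross_skew inner_minus_left)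
  have e: "(?u \<bullet> ?u) *\<^sub>R w = (w \<bullet> ?u) *\<^sub>R ?u" by (rule perp2[OF ws wt])
  have "?u \<noteq> 0" using cross_ne d by auto
  then have "?u \<bullet> ?u \<noteq> 0" by simp
  then have "(?u \<bullet> ?u) *\<^sub>R w \<noteq> 0" using w0 by simp
  then have k0: "\<kappa> \<noteq> 0" using e unfolding \<kappa>_def by auto
  have q: "nn r \<bullet> w \<noteq> 0" using gp_third[OF gp s t r d w0 ws wt] .
  have D2: "D = K3 x t s r \<union> uminus ` K3 x t s r" using D K3_perm(1) by metis
  note G1 = side_geom[OF w ws wt, unfolded k1, OF k0 q xt xr D]
  note G2 = side_geom[OF w wt ws, unfolded k2, OF _ q xs xr D2]
  have k0': "- \<kappa> \<noteq> 0" using k0 by simp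
  note G2' = G2[OF k0']
  have into_s: "side_into D s w \<longleftrightarrow> \<kappa> * (nn t \<bullet> x) * (nn r \<bullet> w) * (nn r \<bullet> x) < 0"
    unfolding side_into_def G1 by auto
  have out_s: "side_out_of D s w \<longleftrightarrow> \<kappa> * (nn t \<bullet> x) * (nn r \<bullet> w) * (nn r \<bullet> x) > 0"
    unfolding side_out_of_def G1 by auto
  have into_t: "side_into D t w \<longleftrightarrow> - \<kappa> * (nn s \<bullet> x) * (nn r \<bullet> w) * (nn r \<bullet> x) < 0"
    unfolding side_into_def G2' by auto
  have out_t: "side_out_of D t w \<longleftrightarrow> - \<kappa> * (nn s \<bullet> x) * (nn r \<bullet> w) * (nn r \<bullet> x) > 0"
    unfolding side_out_of_def G2' by auto
  define P where "P = \<kappa> * (nn r \<bullet> w) * (nn r \<bullet> x)"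
  have P0: "P \<noteq> 0" using k0 q xr by (simp add: P_def)
  have a1: "\<kappa> * (nn t \<bullet> x) * (nn r \<bullet> w) * (nn r \<bullet> x) = P * (nn t \<bullet> x)" by (simp add: P_def algebra_simps)
  have a2: "- \<kappa> * (nn s \<bullet> x) * (nn r \<bullet> w) * (nn r \<bullet> x) = - (P * (nn s \<bullet> x))" by (simp add: P_def algebra_simps)
  show ?thesis
    unfolding into_s out_s into_t out_t a1 a2 neg_less_0_iff_less neg_0_less_iff_less
    using sign4[OF P0 xs xt] by (auto simp: mult.commute)
qed



lemma Kx_sub_K3: "a \<in> S \<Longrightarrow> b \<in> S \<Longrightarrow> c \<in> S \<Longrightarrow> Kx S x \<subseteq> K3 x a b c"
  by (auto simp: Kx_def K3_def)

lemma scale_sign: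
  fixes z :: "real^3"
  assumes "z \<noteq> 0"
  shows "((n \<bullet> (inverse (norm z) *\<^sub>R z)) * y \<ge> 0 \<longleftrightarrow> (n \<bullet> z) * y \<ge> 0)"
    and "((n \<bullet> (inverse (norm z) *\<^sub>R z)) * y > 0 \<longleftrightarrow> (n \<bullet> z) * y > 0)"
    and "(n \<bullet> (inverse (norm z) *\<^sub>R z) = 0 \<longleftrightarrow> n \<bullet> z = 0)"
    and "inverse (norm z) *\<^sub>R z \<in> S2"
proof -
  have p: "inverse (norm z) > 0" using assms by simp
  have e: "(n \<bullet> (inverse (norm z) *\<^sub>R z)) * y = inverse (norm z) * ((n \<bullet> z) * y)" by simp
  show "((n \<bullet> (inverse (norm z) *\<^sub>R z)) * y \<ge> 0 \<longleftrightarrow> (n \<bullet> z) * y \<ge> 0)"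
    unfolding e using p by (simp add: zero_le_mult_iff)
  show "((n \<bullet> (inverse (norm z) *\<^sub>R z)) * y > 0 \<longleftrightarrow> (n \<bullet> z) * y > 0)"
    unfolding e using p by (simp add: zero_less_mult_iff)
  show "(n \<bullet> (inverse (norm z) *\<^sub>R z) = 0 \<longleftrightarrow> n \<bullet> z = 0)" using p by simp
  show "inverse (norm z) *\<^sub>R z \<in> S2" using assms by (simp add: S2_iff)
qed

lemma K3_sub_Kx:
  assumes fin: "finite S" and gp: "general_position S" and x: "x \<in> arr_complement S"
    and abc: "a \<in> S" "b \<in> S" "c \<in> S"
    and other: "\<forall>s\<in>S - {a,b,c}. finite (Kx S x \<inter> dual_line s)"
    and v: "v \<in> K3 x a b c"
  shows "v \<in> Kx S x"
proof (rule ccontr)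
  assume nv: "v \<notin> Kx S x"
  have xs: "\<forall>s\<in>S. nn s \<bullet> x \<noteq> 0" using x by (simp add: arr_compl_iff)
  have vS2: "v \<in> S2" using v by (simp add: K3_def)
  define V where "V = {s\<in>S. (nn s \<bullet> v) * (nn s \<bullet> x) < 0}"
  have Vne: "V \<noteq> {}" using nv vS2 by (auto simp: V_def Kx_def not_le)
  have Vfin: "finite V" using fin by (simp add: V_def)
  have Vabc: "a \<notin> V" "b \<notin> V" "c \<notin> V" using v by (auto simp: V_def K3_def)
  define T where "T = (\<lambda>s. (nn s \<bullet> x) / ((nn s \<bullet> x) - (nn s \<bullet> v)))"
  have Tprops: "0 < T s \<and> T s < 1 \<and> (nn s \<bullet> x) * ((nn s \<bullet> x) - (nn s \<bullet> v)) > 0" if "s \<in> V" for s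
  proof -
    let ?X = "nn s \<bullet> x" and ?Y = "nn s \<bullet> v"
    have XY: "?X * ?Y < 0" using that by (simp add: V_def mult.commute)
    have p: "?X * (?X - ?Y) > 0"
    proof -
      have "?X * (?X - ?Y) = ?X * ?X - ?X * ?Y" by (simp add: algebra_simps)
      moreover have "?X * ?X \<ge> 0" by simp
      ultimately show ?thesis using XY by linarith
    qed
    have q: "(- ?Y) * (?X - ?Y) > 0"
    proof -
      have "(- ?Y) * (?X - ?Y) = ?Y * ?Y - ?X * ?Y" by (simp add: algebra_simps)
      moreover have "?Y * ?Y \<ge> 0" by simp
      ultimately show ?thesis using XY by linarith
    qed
    have "T s > 0" using p by (simp add: T_def zero_less_divide_iff zero_less_mult_iff)
    moreover have "1 - T s = (- ?Y) / (?X - ?Y)"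
    proof -
      have "?X - ?Y \<noteq> 0" using p by auto
      then show ?thesis by (simp add: T_def field_simps)
    qed
    then have "1 - T s > 0" using q by (simp add: zero_less_divide_iff zero_less_mult_iff divide_less_0_iff mult_less_0_iff)
    ultimately show ?thesis using p by simp
  qed
  define t0 where "t0 = Min (T ` V)"
  have "t0 \<in> T ` V" unfolding t0_def using Vne Vfin by (intro Min_in) auto
  then obtain s0 where s0: "s0 \<in> V" "T s0 = t0" by auto
  have t0le: "t0 \<le> T s" if "s \<in> V" for s unfolding t0_def using Vfin that by simp
  have t0: "0 < t0" "t0 < 1" using Tprops[OF s0(1)] s0(2) by auto
  define z where "z = (1 - t0) *\<^sub>R x + t0 *\<^sub>R v"
  have zexp: "(nn s \<bullet> z) * (nn s \<bullet> x) = (nn s \<bullet> x) * (nn s \<bullet> x) - t0 * ((nn s \<bullet> x) * ((nn s \<bullet> x) - (nn s \<bullet> v)))" for s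
    by (simp add: z_def inner_add_right algebra_simps)
  have cone: "\<forall>s\<in>S. (nn s \<bullet> z) * (nn s \<bullet> x) \<ge> 0"
  proof
    fix s assume s: "s \<in> S"
    show "(nn s \<bullet> z) * (nn s \<bullet> x) \<ge> 0"
    proof (cases "s \<in> V")
      case True
      let ?X = "nn s \<bullet> x" and ?Y = "nn s \<bullet> v"
      have tp: "?X * (?X - ?Y) > 0" using Tprops[OF True] by simp
      have "t0 * (?X * (?X - ?Y)) \<le> T s * (?X * (?X - ?Y))"
        using t0le[OF True] tp by (simp add: mult_right_mono)
      also have "T s * (?X * (?X - ?Y)) = ?X * ?X"
      proof -
        have "?X - ?Y \<noteq> 0" using tp by auto
        then show ?thesis by (simp add: T_def field_simps)
      qed
      finally show ?thesis unfolding zexp by simp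
    next
      case False
      then have "(nn s \<bullet> v) * (nn s \<bullet> x) \<ge> 0" using s by (auto simp: V_def)
      moreover have "(nn s \<bullet> z) * (nn s \<bullet> x) = (1 - t0) * ((nn s \<bullet> x) * (nn s \<bullet> x)) + t0 * ((nn s \<bullet> v) * (nn s \<bullet> x))"
        by (simp add: z_def inner_add_right algebra_simps)
      ultimately show ?thesis using t0 by (simp add: add_nonneg_nonneg)
    qed
  qed
  have zs0: "nn s0 \<bullet> z = 0"
  proof -
    let ?X = "nn s0 \<bullet> x" and ?Y = "nn s0 \<bullet> v"
    have tp: "?X * (?X - ?Y) > 0" using Tprops[OF s0(1)] by simp
    then have nz: "?X - ?Y \<noteq> 0" by auto
    have "nn s0 \<bullet> z = ?X - t0 * (?X - ?Y)" by (simp add: z_def inner_add_right algebra_simps)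
    also have "\<dots> = 0"
    proof -
      have "t0 = ?X / (?X - ?Y)" using s0(2) by (simp add: T_def)
      then show ?thesis using nz by (simp add: field_simps)
    qed
    finally show ?thesis .
  qed
  have z0: "z \<noteq> 0"
  proof
    assume "z = 0"
    have ax: "nn a \<bullet> x \<noteq> 0" using xs abc by auto
    have "(nn a \<bullet> v) * (nn a \<bullet> x) \<ge> 0" using v by (simp add: K3_def)
    moreover have "(nn a \<bullet> z) * (nn a \<bullet> x) = (1 - t0) * ((nn a \<bullet> x) * (nn a \<bullet> x)) + t0 * ((nn a \<bullet> v) * (nn a \<bullet> x))"
      by (simp add: z_def inner_add_right algebra_simps)
    moreover have "(nn a \<bullet> x) * (nn a \<bullet> x) > 0" using ax by (metis linorder_neqE_linordered_idom mult_neg_neg mult_pos_pos)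
    ultimately have "(nn a \<bullet> z) * (nn a \<bullet> x) > 0" using t0
      by (smt (verit) mult_nonneg_nonneg mult_pos_pos)
    then show False using \<open>z = 0\<close> by simp
  qed
  have s0S: "s0 \<in> S" "s0 \<notin> {a,b,c}" using s0(1) Vabc by (auto simp: V_def)
  have "infinite (Kx S x \<inter> dual_line s0)"
    by (rule facet[OF fin gp x z0 cone s0S(1) zs0])
  then show False using other s0S by auto
qed

lemma no_cross:
  assumes fin: "finite S" and gp: "general_position S" and x: "x \<in> arr_complement S"
    and abc: "a \<in> S" "b \<in> S" "c \<in> S" and p: "p \<in> S"
    and sub: "K3 x a b c \<subseteq> Kx S x"
    and bc: "(nn b \<bullet> x) * (nn c \<bullet> x) < 0"
    and sep: "orient a p b * orient a p c < 0"
  shows "infinite (Kx S x \<inter> dual_line p)"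
proof -
  define w0 where "w0 = cross3 (nn a) (nn p)"
  have wb: "w0 \<bullet> nn b = - orient a p b" "w0 \<bullet> nn c = - orient a p c"
    unfolding w0_def by (simp_all add: trip)
  have wbc: "(nn b \<bullet> w0) * (nn c \<bullet> w0) < 0" using sep wb by (simp add: inner_commute)
  have wa: "nn a \<bullet> w0 = 0" "nn p \<bullet> w0 = 0" unfolding w0_def
    by (simp_all add: dot_cross_self inner_commute[of "nn p"])
  define z where "z = (if (nn b \<bullet> w0) * (nn b \<bullet> x) > 0 then w0 else - w0)"
  have bw0: "nn b \<bullet> w0 \<noteq> 0" using wbc by auto
  have bx: "nn b \<bullet> x \<noteq> 0" using bc by auto
  have zb: "(nn b \<bullet> z) * (nn b \<bullet> x) > 0"
  proof (cases "(nn b \<bullet> w0) * (nn b \<bullet> x) > 0")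
    case True then show ?thesis by (simp add: z_def)
  next
    case False
    then have "(nn b \<bullet> w0) * (nn b \<bullet> x) < 0" using bw0 bx
      by (metis linorder_neqE_linordered_idom mult_eq_0_iff)
    then show ?thesis using False by (simp add: z_def)
  qed
  have zbc: "(nn b \<bullet> z) * (nn c \<bullet> z) < 0" using wbc by (simp add: z_def)
  have "((nn b \<bullet> z) * (nn b \<bullet> x)) * ((nn c \<bullet> z) * (nn c \<bullet> x)) = ((nn b \<bullet> z) * (nn c \<bullet> z)) * ((nn b \<bullet> x) * (nn c \<bullet> x))"
    by (simp add: algebra_simps)
  also have "\<dots> > 0" using zbc bc by (simp add: mult_neg_neg)
  finally have zc: "(nn c \<bullet> z) * (nn c \<bullet> x) > 0" using zb by (simp add: zero_less_mult_iff)
  have za: "nn a \<bullet> z = 0" "nn p \<bullet> z = 0" using wa by (simp_all add: z_def)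
  have z0: "z \<noteq> 0" using zb by auto
  define z' where "z' = inverse (norm z) *\<^sub>R z"
  note sc = scale_sign[OF z0]
  have "z' \<in> K3 x a b c" unfolding K3_def z'_def using sc za zb zc by (simp add: less_imp_le)
  then have z'K: "z' \<in> Kx S x" using sub by auto
  have z'0: "z' \<noteq> 0" using sc(4) by (auto simp: z'_def S2_iff)
  have cone: "\<forall>s\<in>S. (nn s \<bullet> z') * (nn s \<bullet> x) \<ge> 0" using z'K by (simp add: Kx_def)
  have "nn p \<bullet> z' = 0" using za sc(3) by (simp add: z'_def)
  then show ?thesis by (rule facet[OF fin gp x z'0 cone p])
qed



lemma orient_deg: "orient s t t = 0" "orient s s t = 0"
  by (simp_all add: orient_def)

lemma V_inner: "nn s \<bullet> vertical_infinity = -1"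
  by (simp add: dual_normal_def vertical_infinity_def inner_vec_def sum_3)

lemma V_S2: "vertical_infinity \<in> S2"
proof -
  have "vertical_infinity \<bullet> vertical_infinity = 1"
    by (simp add: vertical_infinity_def inner_vec_def sum_3)
  then show ?thesis by (simp add: S2_iff norm_eq_sqrt_inner)
qed

lemma D_S2: "w \<in> Kx S x \<union> uminus ` Kx S x \<Longrightarrow> w \<in> S2"
  by (auto simp: Kx_def S2_def)

lemma meet_eq: "meet a b = inverse (norm (cross3 (nn a) (nn b))) *\<^sub>R cross3 (nn a) (nn b)"
  by (simp add: meet_def divide_inverse)

lemma meet_props:
  assumes "a \<noteq> b"
  shows "meet a b \<in> S2" "nn a \<bullet> meet a b = 0" "nn b \<bullet> meet a b = 0"
    "nn c \<bullet> meet a b = - inverse (norm (cross3 (nn a) (nn b))) * orient a b c"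
proof -
  have u: "cross3 (nn a) (nn b) \<noteq> 0" using cross_ne assms by auto
  show "meet a b \<in> S2" unfolding meet_eq using scale_sign(4)[OF u] .
  show "nn a \<bullet> meet a b = 0" unfolding meet_eq by (simp add: dot_cross_self)
  show "nn b \<bullet> meet a b = 0" unfolding meet_eq by (simp add: dot_cross_self inner_commute[of "nn b"])
  show "nn c \<bullet> meet a b = - inverse (norm (cross3 (nn a) (nn b))) * orient a b c"
    unfolding meet_eq using trip[of a b c] by (simp add: inner_commute[of "nn c"])
qed

lemma pm_meet:
  assumes ab: "a \<noteq> b" and w: "w \<in> S2" and wa: "nn a \<bullet> w = 0" and wb: "nn b \<bullet> w = 0"
  shows "w = meet a b \<or> w = - meet a b"
proof -
  let ?u = "cross3 (nn a) (nn b)"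
  have u: "?u \<noteq> 0" using cross_ne ab by auto
  have e: "(?u \<bullet> ?u) *\<^sub>R w = (w \<bullet> ?u) *\<^sub>R ?u" by (rule perp2[OF wa wb])
  have nw: "norm w = 1" using w by (simp add: S2_iff)
  have uu: "?u \<bullet> ?u = (norm ?u)\<^sup>2" by (simp add: power2_norm_eq_inner)
  have nu: "norm ?u > 0" using u by simp
  have "norm ((?u \<bullet> ?u) *\<^sub>R w) = norm ((w \<bullet> ?u) *\<^sub>R ?u)" using e by simp
  then have "(norm ?u)\<^sup>2 = \<bar>w \<bullet> ?u\<bar> * norm ?u" using nw uu by simp
  then have "\<bar>w \<bullet> ?u\<bar> = norm ?u" using nu by (simp add: power2_eq_square)
  then have wu: "w \<bullet> ?u = norm ?u \<or> w \<bullet> ?u = - norm ?u" by linarith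
  have w_eq: "w = ((w \<bullet> ?u) / (norm ?u)\<^sup>2) *\<^sub>R ?u"
  proof -
    have N: "(norm ?u)\<^sup>2 \<noteq> 0" using nu by simp
    have e': "(norm ?u)\<^sup>2 *\<^sub>R w = (w \<bullet> ?u) *\<^sub>R ?u" using e uu by simp
    have "w = inverse ((norm ?u)\<^sup>2) *\<^sub>R ((norm ?u)\<^sup>2 *\<^sub>R w)" using N by simp
    also have "\<dots> = inverse ((norm ?u)\<^sup>2) *\<^sub>R ((w \<bullet> ?u) *\<^sub>R ?u)" using e' by simp
    also have "\<dots> = ((w \<bullet> ?u) / (norm ?u)\<^sup>2) *\<^sub>R ?u" by (simp add: divide_inverse mult.commute)
    finally show ?thesis .
  qed
  show ?thesis
  proof (cases "w \<bullet> ?u = norm ?u")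
    case True
    then have "w = inverse (norm ?u) *\<^sub>R ?u" using w_eq nu by (simp add: power2_eq_square divide_inverse)
    then show ?thesis by (simp add: meet_eq)
  next
    case False
    then have "w \<bullet> ?u = - norm ?u" using wu by simp
    then have "w = - (inverse (norm ?u) *\<^sub>R ?u)" using w_eq nu by (simp add: power2_eq_square divide_inverse)
    then show ?thesis by (simp add: meet_eq)
  qed
qed

lemma K_scale:
  assumes "l > 0"
  shows "K3 (l *\<^sub>R x) s t r = K3 x s t r" "Kx S (l *\<^sub>R x) = Kx S x"
  using assms by (auto simp: K3_def Kx_def zero_le_mult_iff mult.left_commute[of _ l])

lemma x0_inner:
  "nn a \<bullet> (cross3 (nn a) (nn b) - cross3 (nn b) (nn c) - cross3 (nn c) (nn a)) = orient a b c"
  "nn b \<bullet> (cross3 (nn a) (nn b) - cross3 (nn b) (nn c) - cross3 (nn c) (nn a)) = orient a b c"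
  "nn c \<bullet> (cross3 (nn a) (nn b) - cross3 (nn b) (nn c) - cross3 (nn c) (nn a)) = - orient a b c"
  "nn p \<bullet> (cross3 (nn a) (nn b) - cross3 (nn b) (nn c) - cross3 (nn c) (nn a)) =
     - orient a b p + orient b c p + orient c a p"
  by (simp_all add: cross3_simps dual_normal_def orient_def)

lemma decomp_P:
  "orient a b c * (nn p \<bullet> v) = (nn a \<bullet> v) * orient b c p + (nn b \<bullet> v) * orient c a p + (nn c \<bullet> v) * orient a b p"
  by (simp add: inner_vec_def sum_3 dual_normal_def orient_def algebra_simps)

lemma decomp_v:
  "(orient b c a) *\<^sub>R v = - ((nn a \<bullet> v) *\<^sub>R cross3 (nn b) (nn c) + (nn b \<bullet> v) *\<^sub>R cross3 (nn c) (nn a) + (nn c \<bullet> v) *\<^sub>R cross3 (nn a) (nn b))"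
  by (simp add: cross3_simps dual_normal_def orient_def forall_3)



lemma rhs_imp_exit:
  assumes fin: "finite S" and gp: "general_position S"
    and a: "a \<in> S" and b: "b \<in> S" and c: "c \<in> S"
    and ab: "a \<noteq> b" and ac: "a \<noteq> c" and bc: "b \<noteq> c"
    and tri: "triangular_cell S D a b c" and nm: "\<not> marked_cell S D"
    and ex: "is_exit_vertex S D (meet a b)"
  shows "exit_edge S a b c"
proof -
  have cell: "is_cell S D" and bl0: "bounding_lines S D = {a,b,c}"
    using tri by (simp_all add: triangular_cell_def)
  obtain x where x: "x \<in> arr_complement S" and Dx: "D = Kx S x \<union> uminus ` Kx S x"
    using cell is_cell_iff[OF a] by auto
  have bl: "{s\<in>S. infinite (Kx S x \<inter> dual_line s)} = {a,b,c}"
    using bl0 unfolding Dx bounding_lines_eq .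
  have other: "\<forall>s\<in>S-{a,b,c}. finite (Kx S x \<inter> dual_line s)" using bl by blast
  have KK: "Kx S x = K3 x a b c"
    using Kx_sub_K3[OF a b c] K3_sub_Kx[OF fin gp x a b c other] by blast
  have D3: "D = K3 x a b c \<union> uminus ` K3 x a b c" using Dx KK by simp
  have xa: "nn a \<bullet> x \<noteq> 0" and xb: "nn b \<bullet> x \<noteq> 0" and xc: "nn c \<bullet> x \<noteq> 0"
    using x a b c by (auto simp: arr_compl_iff)
  let ?m = "meet a b"
  note mp = meet_props(1-3)[OF ab] meet_props(4)[OF ab, of c]
  have mc: "nn c \<bullet> ?m \<noteq> 0"
  proof -
    have "cross3 (nn a) (nn b) \<noteq> 0" using cross_ne ab by auto
    then have "inverse (norm (cross3 (nn a) (nn b))) \<noteq> 0" by simp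
    moreover have "orient a b c \<noteq> 0" using gp_orient[OF gp a b c ab ac bc] .
    ultimately show ?thesis using mp(4) by simp
  qed
  from ex obtain s' t' where st: "s' \<in> bounding_lines S D" "t' \<in> bounding_lines S D" "s' \<noteq> t'"
    "?m \<in> dual_line s'" "?m \<in> dual_line t'" "side_into D s' ?m" "side_out_of D t' ?m"
    unfolding is_exit_vertex_def in_out_vertex_def by blast
  have "s' \<noteq> c" "t' \<noteq> c" using st(4,5) mc by (auto simp: dual_line_def inner_commute)
  then have "(s' = a \<and> t' = b) \<or> (s' = b \<and> t' = a)" using st(1,2,3) bl0 by auto
  then have "(side_into D a ?m \<and> side_out_of D b ?m) \<or> (side_into D b ?m \<and> side_out_of D a ?m)"
    using st(6,7) by auto
  then have ABx: "(nn a \<bullet> x) * (nn b \<bullet> x) > 0"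
    using vertex[OF gp a b c ab ac bc mp(1) mp(2) mp(3) xa xb xc D3] by simp
  have nV: "vertical_infinity \<notin> D" using nm cell by (simp add: marked_cell_def)
  have ACx: "(nn a \<bullet> x) * (nn c \<bullet> x) < 0"
  proof (rule ccontr)
    assume "\<not> ?thesis"
    then have ACp: "(nn a \<bullet> x) * (nn c \<bullet> x) > 0" using xa xc
      by (metis linorder_neqE_linordered_idom mult_eq_0_iff)
    show False
    proof (cases "nn a \<bullet> x > 0")
      case True
      then have "nn b \<bullet> x > 0" "nn c \<bullet> x > 0" using ABx ACp by (auto simp: zero_less_mult_iff)
      then have "- vertical_infinity \<in> K3 x a b c" using True V_S2
        by (simp add: K3_def V_inner S2_def)
      then have "vertical_infinity \<in> uminus ` K3 x a b c" by (metis image_eqI minus_minus)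
      then show False using nV D3 by auto
    next
      case False
      then have an: "nn a \<bullet> x < 0" using xa by simp
      then have "nn b \<bullet> x < 0" "nn c \<bullet> x < 0" using ABx ACp by (auto simp: zero_less_mult_iff)
      then have "vertical_infinity \<in> K3 x a b c" using an V_S2
        by (simp add: K3_def V_inner)
      then show False using nV D3 by auto
    qed
  qed
  have BCx: "(nn b \<bullet> x) * (nn c \<bullet> x) < 0"
  proof -
    have "((nn a \<bullet> x) * (nn b \<bullet> x)) * ((nn a \<bullet> x) * (nn c \<bullet> x)) < 0"
      using ABx ACx by (simp add: mult_pos_neg)
    moreover have "((nn a \<bullet> x) * (nn b \<bullet> x)) * ((nn a \<bullet> x) * (nn c \<bullet> x)) = ((nn a \<bullet> x) * (nn a \<bullet> x)) * ((nn b \<bullet> x) * (nn c \<bullet> x))"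
      by (simp add: algebra_simps)
    moreover have "(nn a \<bullet> x) * (nn a \<bullet> x) > 0" using xa
      by (metis linorder_neqE_linordered_idom mult_neg_neg mult_pos_pos)
    ultimately show ?thesis by (simp add: mult_less_0_iff)
  qed
  have sub1: "K3 x a b c \<subseteq> Kx S x" using KK by simp
  have sub2: "K3 x b a c \<subseteq> Kx S x" using KK K3_perm(1)[of x a b c] by simp
  have ACx': "(nn a \<bullet> x) * (nn c \<bullet> x) < 0" using ACx .
  have sa: "\<not> (\<exists>p\<in>S. p \<noteq> a \<and> strictly_separates a p b c)"
  proof
    assume "\<exists>p\<in>S. p \<noteq> a \<and> strictly_separates a p b c"
    then obtain p where p: "p \<in> S" "p \<noteq> a" and sep: "orient a p b * orient a p c < 0"
      by (auto simp: strictly_separates_def)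
    have "p \<noteq> b" "p \<noteq> c" using sep by (auto simp: orient_deg)
    moreover have "infinite (Kx S x \<inter> dual_line p)"
      by (rule no_cross[OF fin gp x a b c p(1) sub1 BCx sep])
    ultimately show False using bl p by blast
  qed
  have sb: "\<not> (\<exists>p\<in>S. p \<noteq> b \<and> strictly_separates b p a c)"
  proof
    assume "\<exists>p\<in>S. p \<noteq> b \<and> strictly_separates b p a c"
    then obtain p where p: "p \<in> S" "p \<noteq> b" and sep: "orient b p a * orient b p c < 0"
      by (auto simp: strictly_separates_def)
    have "p \<noteq> a" "p \<noteq> c" using sep by (auto simp: orient_deg)
    moreover have "infinite (Kx S x \<inter> dual_line p)"
      by (rule no_cross[OF fin gp x b a c p(1) sub2 ACx' sep])
    ultimately show False using bl p by blast
  qed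
  show ?thesis unfolding exit_edge_def using a b c ab ac bc sa sb by blast
qed



lemma cone_pos:
  fixes a1 a2 a3 q1 q2 q3 Q :: real
  assumes "a1 \<ge> 0" "a2 \<ge> 0" "a3 \<ge> 0" "a1 \<noteq> 0 \<or> a2 \<noteq> 0 \<or> a3 \<noteq> 0"
    "q1 * Q > 0" "q2 * Q > 0" "q3 * Q > 0"
  shows "(a1 * q1 + a2 * q2 + a3 * q3) * Q > 0"
proof -
  have e: "(a1 * q1 + a2 * q2 + a3 * q3) * Q = a1 * (q1 * Q) + a2 * (q2 * Q) + a3 * (q3 * Q)"
    by (simp add: algebra_simps)
  have t: "a1 * (q1 * Q) \<ge> 0" "a2 * (q2 * Q) \<ge> 0" "a3 * (q3 * Q) \<ge> 0"
    using assms by (simp_all add: less_imp_le)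
  have "a1 * (q1 * Q) > 0 \<or> a2 * (q2 * Q) > 0 \<or> a3 * (q3 * Q) > 0"
    using assms by (auto intro: mult_pos_pos)
  then show ?thesis unfolding e using t by linarith
qed

lemma sign3:
  fixes q1 q2 q3 :: real
  assumes "q1 * q3 > 0" "q2 * q3 > 0"
  shows "q1 * (q1 + q2 + q3) > 0" "q2 * (q1 + q2 + q3) > 0" "q3 * (q1 + q2 + q3) > 0"
  using assms by (auto simp: zero_less_mult_iff)

lemma exit_imp_rhs:
  assumes fin: "finite S" and gp: "general_position S"
    and a: "a \<in> S" and b: "b \<in> S" and c: "c \<in> S"
    and ab: "a \<noteq> b" and ac: "a \<noteq> c" and bc: "b \<noteq> c"
    and ee: "exit_edge S a b c"
  shows "\<exists>D. triangular_cell S D a b c \<and> \<not> marked_cell S D \<and>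
         is_witness_line S D c \<and> is_exit_vertex S D (meet a b)"
proof -
  define \<Delta> where "\<Delta> = orient a b c"
  have \<Delta>0: "\<Delta> \<noteq> 0" unfolding \<Delta>_def using gp_orient[OF gp a b c ab ac bc] .
  define x0 where "x0 = cross3 (nn a) (nn b) - cross3 (nn b) (nn c) - cross3 (nn c) (nn a)"
  have x0a: "nn a \<bullet> x0 = \<Delta>" and x0b: "nn b \<bullet> x0 = \<Delta>" and x0c: "nn c \<bullet> x0 = - \<Delta>"
    unfolding x0_def \<Delta>_def by (rule x0_inner)+
  have x0p: "nn p \<bullet> x0 = orient b c p + orient c a p + (- orient a b p)" for p
    unfolding x0_def using x0_inner(4)[of p a b c] by simp
  have sepa: "orient a p b * orient a p c \<ge> 0" if "p \<in> S" "p \<noteq> a" for p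
    using ee that unfolding exit_edge_def strictly_separates_def by (auto simp: not_less)
  have sepb: "orient b p a * orient b p c \<ge> 0" if "p \<in> S" "p \<noteq> b" for p
    using ee that unfolding exit_edge_def strictly_separates_def by (auto simp: not_less)
  have qs: "orient b c p * (nn p \<bullet> x0) > 0 \<and> orient c a p * (nn p \<bullet> x0) > 0 \<and> (- orient a b p) * (nn p \<bullet> x0) > 0"
    if p: "p \<in> S" "p \<notin> {a,b,c}" for p
  proof -
    have n1: "orient b c p \<noteq> 0" using gp_orient[OF gp b c p(1)] p bc by auto
    have n2: "orient c a p \<noteq> 0" using gp_orient[OF gp c a p(1)] p ac by auto
    have n3: "orient a b p \<noteq> 0" using gp_orient[OF gp a b p(1)] p ab by auto
    have i1: "orient a p b = - orient a b p" "orient a p c = orient c a p"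
      "orient b p a = orient a b p" "orient b p c = - orient b c p"
      by (simp_all add: orient_def algebra_simps)
    have "(- orient a b p) * orient c a p \<ge> 0" using sepa[OF p(1)] p i1 by auto
    then have h1: "orient c a p * (- orient a b p) > 0" using n2 n3
      by (simp add: mult.commute less_le)
    have "orient a b p * (- orient b c p) \<ge> 0" using sepb[OF p(1)] p i1 by auto
    moreover have "orient b c p * (- orient a b p) = orient a b p * (- orient b c p)" by simp
    moreover have "orient b c p * (- orient a b p) \<noteq> 0" using n1 n3 by simp
    ultimately have h2: "orient b c p * (- orient a b p) > 0" by (simp only: less_le) simp
    show ?thesis unfolding x0p using sign3[OF h2 h1] by simp
  qed
  have pos: "(nn p \<bullet> v) * (nn p \<bullet> x0) > 0"
    if p: "p \<in> S" "p \<notin> {a,b,c}" and v: "v \<noteq> 0" "(nn a \<bullet> v) * (nn a \<bullet> x0) \<ge> 0"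
       "(nn b \<bullet> v) * (nn b \<bullet> x0) \<ge> 0" "(nn c \<bullet> v) * (nn c \<bullet> x0) \<ge> 0" for p v
  proof -
    have nz: "nn a \<bullet> v \<noteq> 0 \<or> nn b \<bullet> v \<noteq> 0 \<or> nn c \<bullet> v \<noteq> 0"
    proof (rule ccontr)
      assume "\<not> ?thesis"
      then have "(orient b c a) *\<^sub>R v = 0" using decomp_v[of b c a v] by simp
      moreover have "orient b c a = \<Delta>" by (simp add: \<Delta>_def orient_def algebra_simps)
      ultimately show False using \<Delta>0 v(1) by simp
    qed
    have a1: "(nn a \<bullet> v) * \<Delta> \<ge> 0" "(nn b \<bullet> v) * \<Delta> \<ge> 0" "(nn c \<bullet> v) * (- \<Delta>) \<ge> 0"
      using v x0a x0b x0c by auto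
    have nz': "(nn a \<bullet> v) * \<Delta> \<noteq> 0 \<or> (nn b \<bullet> v) * \<Delta> \<noteq> 0 \<or> (nn c \<bullet> v) * (- \<Delta>) \<noteq> 0"
      using nz \<Delta>0 by auto
    note q = qs[OF p]
    have "((nn a \<bullet> v) * \<Delta> * orient b c p + (nn b \<bullet> v) * \<Delta> * orient c a p + (nn c \<bullet> v) * (- \<Delta>) * (- orient a b p)) * (nn p \<bullet> x0) > 0"
      using cone_pos[OF a1 nz'] q by blast
    moreover have "(nn a \<bullet> v) * \<Delta> * orient b c p + (nn b \<bullet> v) * \<Delta> * orient c a p + (nn c \<bullet> v) * (- \<Delta>) * (- orient a b p)
         = \<Delta> * (\<Delta> * (nn p \<bullet> v))"
      using decomp_P[of a b c p v] unfolding \<Delta>_def by (simp add: algebra_simps)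
    ultimately have "(\<Delta> * (\<Delta> * (nn p \<bullet> v))) * (nn p \<bullet> x0) > 0" by metis
    then have "(\<Delta> * \<Delta>) * ((nn p \<bullet> v) * (nn p \<bullet> x0)) > 0" by (simp add: mult_ac)
    moreover have "\<Delta> * \<Delta> > 0" using \<Delta>0 by (metis linorder_neqE_linordered_idom mult_neg_neg mult_pos_pos)
    ultimately show ?thesis by (simp add: zero_less_mult_iff)
  qed
  have x0ne: "x0 \<noteq> 0" using x0a \<Delta>0 by auto
  define l where "l = inverse (norm x0)"
  have lpos: "l > 0" using x0ne by (simp add: l_def)
  define x where "x = l *\<^sub>R x0"
  have Ks: "Kx S x = Kx S x0" "\<And>s t r. K3 x s t r = K3 x0 s t r"
    unfolding x_def using K_scale[OF lpos] by auto
  have x0S: "nn s \<bullet> x0 \<noteq> 0" if "s \<in> S" for s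
  proof (cases "s \<in> {a,b,c}")
    case True then show ?thesis using x0a x0b x0c \<Delta>0 by auto
  next
    case False then show ?thesis using qs[OF that False] by auto
  qed
  have xA: "x \<in> arr_complement S"
    unfolding arr_compl_iff x_def l_def using scale_sign(3,4)[OF x0ne] x0S by auto
  have KK: "Kx S x0 = K3 x0 a b c"
  proof
    show "Kx S x0 \<subseteq> K3 x0 a b c" by (rule Kx_sub_K3[OF a b c])
    show "K3 x0 a b c \<subseteq> Kx S x0"
    proof
      fix v assume v: "v \<in> K3 x0 a b c"
      have v0: "v \<noteq> 0" and vS: "v \<in> S2" using v by (auto simp: K3_def S2_def)
      have "(nn s \<bullet> v) * (nn s \<bullet> x0) \<ge> 0" if s: "s \<in> S" for s
      proof (cases "s \<in> {a,b,c}")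
        case True then show ?thesis using v by (auto simp: K3_def)
      next
        case False then show ?thesis using pos[OF s False v0] v by (auto simp: K3_def less_imp_le)
      qed
      then show "v \<in> Kx S x0" using vS by (simp add: Kx_def)
    qed
  qed
  define D where "D = Kx S x \<union> uminus ` Kx S x"
  have cell: "is_cell S D" unfolding D_def using is_cell_iff[OF a] xA by auto
  have D3: "D = K3 x0 a b c \<union> uminus ` K3 x0 a b c" unfolding D_def Ks KK ..
  have conex: "\<forall>s\<in>S. (nn s \<bullet> z) * (nn s \<bullet> x) \<ge> 0" if "\<forall>s\<in>S. (nn s \<bullet> z) * (nn s \<bullet> x0) \<ge> 0" for z
  proof
    fix s assume "s \<in> S"
    then have "(nn s \<bullet> z) * (nn s \<bullet> x0) \<ge> 0" using that by auto
    then have "l * ((nn s \<bullet> z) * (nn s \<bullet> x0)) \<ge> 0" using lpos by simp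
    then show "(nn s \<bullet> z) * (nn s \<bullet> x) \<ge> 0" by (simp add: x_def algebra_simps)
  qed
  define z1 where "z1 = cross3 (nn a) (nn b)"
  have z1: "nn a \<bullet> z1 = 0" "nn b \<bullet> z1 = 0" "nn c \<bullet> z1 = - \<Delta>" "z1 \<noteq> 0"
    unfolding z1_def \<Delta>_def using trip[of a b c] cross_ne[OF ab]
    by (simp_all add: dot_cross_self inner_commute[of "nn b"] inner_commute[of "nn c"])
  have cone1: "\<forall>s\<in>S. (nn s \<bullet> z1) * (nn s \<bullet> x0) \<ge> 0"
  proof
    fix s assume s: "s \<in> S"
    show "(nn s \<bullet> z1) * (nn s \<bullet> x0) \<ge> 0"
    proof (cases "s \<in> {a,b,c}")
      case True then show ?thesis using z1 x0c by auto
    next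
      case False then show ?thesis using pos[OF s False z1(4)] z1 x0c by (simp add: less_imp_le)
    qed
  qed
  define z2 where "z2 = - cross3 (nn b) (nn c)"
  have z2: "nn a \<bullet> z2 = \<Delta>" "nn b \<bullet> z2 = 0" "nn c \<bullet> z2 = 0" "z2 \<noteq> 0"
  proof -
    have "nn a \<bullet> z2 = orient b c a" unfolding z2_def using trip[of b c a] by (simp add: inner_commute)
    then show "nn a \<bullet> z2 = \<Delta>" by (simp add: \<Delta>_def orient_def algebra_simps)
    show "nn b \<bullet> z2 = 0" "nn c \<bullet> z2 = 0" unfolding z2_def
      by (simp_all add: dot_cross_self inner_commute[of "nn c"])
    show "z2 \<noteq> 0" unfolding z2_def using cross_ne[OF bc] by simp
  qed
  have cone2: "\<forall>s\<in>S. (nn s \<bullet> z2) * (nn s \<bullet> x0) \<ge> 0"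
  proof
    fix s assume s: "s \<in> S"
    show "(nn s \<bullet> z2) * (nn s \<bullet> x0) \<ge> 0"
    proof (cases "s \<in> {a,b,c}")
      case True then show ?thesis using z2 x0a by auto
    next
      case False then show ?thesis using pos[OF s False z2(4)] z2 x0a by (simp add: less_imp_le)
    qed
  qed
  have infa: "infinite (Kx S x \<inter> dual_line a)" by (rule facet[OF fin gp xA z1(4) conex[OF cone1] a z1(1)])
  have infb: "infinite (Kx S x \<inter> dual_line b)" by (rule facet[OF fin gp xA z1(4) conex[OF cone1] b z1(2)])
  have infc: "infinite (Kx S x \<inter> dual_line c)" by (rule facet[OF fin gp xA z2(4) conex[OF cone2] c z2(3)])
  have emp: "Kx S x \<inter> dual_line p = {}" if p: "p \<in> S" "p \<notin> {a,b,c}" for p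
  proof (rule ccontr)
    assume "Kx S x \<inter> dual_line p \<noteq> {}"
    then obtain v where v: "v \<in> K3 x0 a b c" "v \<bullet> nn p = 0" unfolding Ks KK dual_line_def by auto
    have v0: "v \<noteq> 0" using v by (auto simp: K3_def S2_def)
    have "(nn p \<bullet> v) * (nn p \<bullet> x0) > 0" using pos[OF p v0] v(1) by (auto simp: K3_def)
    then show False using v(2) by (simp add: inner_commute)
  qed
  have blD: "bounding_lines S D = {a,b,c}"
    unfolding D_def bounding_lines_eq using infa infb infc emp a b c by auto
  have tri: "triangular_cell S D a b c" using cell blD by (simp add: triangular_cell_def)
  have nm: "\<not> marked_cell S D"
  proof
    assume "marked_cell S D"
    then have "vertical_infinity \<in> D" by (simp add: marked_cell_def)
    then have "vertical_infinity \<in> K3 x0 a b c \<or> - vertical_infinity \<in> K3 x0 a b c"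
      unfolding D3 by (metis UnE imageE minus_minus)
    then show False
    proof
      assume "vertical_infinity \<in> K3 x0 a b c"
      then have "- \<Delta> \<ge> 0" "\<Delta> \<ge> 0" by (auto simp: K3_def V_inner x0a x0c)
      then show False using \<Delta>0 by simp
    next
      assume "- vertical_infinity \<in> K3 x0 a b c"
      then have "\<Delta> \<ge> 0" "- \<Delta> \<ge> 0" by (auto simp: K3_def V_inner x0a x0c)
      then show False using \<Delta>0 by simp
    qed
  qed
  let ?m = "meet a b"
  note mp = meet_props(1-3)[OF ab] meet_props(4)[OF ab, of c]
  have mc: "nn c \<bullet> ?m \<noteq> 0"
  proof -
    have "inverse (norm (cross3 (nn a) (nn b))) \<noteq> 0" using cross_ne[OF ab] by simp
    then show ?thesis using mp(4) \<Delta>0 by (simp add: \<Delta>_def)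
  qed
  have mK: "?m \<in> K3 x0 a b c"
  proof -
    have e: "?m = inverse (norm z1) *\<^sub>R z1" unfolding z1_def by (rule meet_eq)
    note sc = scale_sign[OF z1(4)]
    have "(nn c \<bullet> z1) * (nn c \<bullet> x0) \<ge> 0" using z1 x0c by simp
    then have "(nn c \<bullet> (inverse (norm z1) *\<^sub>R z1)) * (nn c \<bullet> x0) \<ge> 0"
      using sc(1)[of "nn c" "nn c \<bullet> x0"] by blast
    then have "(nn c \<bullet> ?m) * (nn c \<bullet> x0) \<ge> 0" using e by simp
    then show ?thesis unfolding K3_def using mp(1,2,3) by simp
  qed
  have mD: "?m \<in> D" using mK D3 by auto
  have xa: "nn a \<bullet> x0 \<noteq> 0" "nn b \<bullet> x0 \<noteq> 0" "nn c \<bullet> x0 \<noteq> 0" using x0a x0b x0c \<Delta>0 by auto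
  have ABp: "(nn a \<bullet> x0) * (nn b \<bullet> x0) > 0" using x0a x0b \<Delta>0
    by (metis linorder_neqE_linordered_idom mult_neg_neg mult_pos_pos)
  have ACn: "\<not> (nn a \<bullet> x0) * (nn c \<bullet> x0) > 0" using x0a x0c
    by simp
  have BCn: "\<not> (nn b \<bullet> x0) * (nn c \<bullet> x0) > 0" using x0b x0c
    by simp
  have vab: "(side_into D a ?m \<and> side_out_of D b ?m) \<or> (side_into D b ?m \<and> side_out_of D a ?m)"
    using vertex[OF gp a b c ab ac bc mp(1) mp(2) mp(3) xa D3] ABp by simp
  have mdl: "?m \<in> dual_line a" "?m \<in> dual_line b" "?m \<notin> dual_line c"
    using mp mc by (auto simp: dual_line_def inner_commute)
  have aBL: "a \<in> bounding_lines S D" and bBL: "b \<in> bounding_lines S D" and cBL: "c \<in> bounding_lines S D"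
    using blD by auto
  have io: "in_out_vertex S D ?m"
    using vab
  proof
    assume h: "side_into D a ?m \<and> side_out_of D b ?m"
    show ?thesis unfolding in_out_vertex_def
      using mD aBL bBL ab mdl(1,2) h by blast
  next
    assume h: "side_into D b ?m \<and> side_out_of D a ?m"
    have ba: "b \<noteq> a" using ab by simp
    show ?thesis unfolding in_out_vertex_def
      using mD aBL bBL ba mdl(1,2) h by blast
  qed
  have Dac: "D = K3 x0 a c b \<union> uminus ` K3 x0 a c b" using D3 K3_perm(2)[of x0 a b c] by simp
  have Dbc: "D = K3 x0 b c a \<union> uminus ` K3 x0 b c a" using D3 K3_perm(3)[of x0 b c a] by simp
  have uniq: "w = ?m \<or> w = - ?m" if w: "in_out_vertex S D w" for w
  proof -
    from w have wD: "w \<in> D" unfolding in_out_vertex_def by blast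
    from w obtain s' t' where st: "s' \<in> bounding_lines S D" "t' \<in> bounding_lines S D" "s' \<noteq> t'"
      "w \<in> dual_line s'" "w \<in> dual_line t'" "side_into D s' w" "side_out_of D t' w"
      unfolding in_out_vertex_def by blast
    have wS: "w \<in> S2" using wD D_S2 unfolding D_def by blast
    have wl: "nn s' \<bullet> w = 0" "nn t' \<bullet> w = 0" using st(4,5) by (auto simp: dual_line_def inner_commute)
    have s3: "s' = a \<or> s' = b \<or> s' = c" and t3: "t' = a \<or> t' = b \<or> t' = c"
      using st(1,2) blD by auto
    have nac: False if "(s' = a \<and> t' = c) \<or> (s' = c \<and> t' = a)"
    proof -
      have wac: "nn a \<bullet> w = 0" "nn c \<bullet> w = 0" using wl that by auto
      have "(side_into D a w \<and> side_out_of D c w) \<or> (side_into D c w \<and> side_out_of D a w)"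
        using that st(6,7) by auto
      then have "(nn a \<bullet> x0) * (nn c \<bullet> x0) > 0"
        using vertex[OF gp a c b ac ab bc[symmetric] wS wac xa(1) xa(3) xa(2) Dac] by simp
      then show False using ACn by simp
    qed
    have nbc: False if "(s' = b \<and> t' = c) \<or> (s' = c \<and> t' = b)"
    proof -
      have wbc: "nn b \<bullet> w = 0" "nn c \<bullet> w = 0" using wl that by auto
      have "(side_into D b w \<and> side_out_of D c w) \<or> (side_into D c w \<and> side_out_of D b w)"
        using that st(6,7) by auto
      then have "(nn b \<bullet> x0) * (nn c \<bullet> x0) > 0"
        using vertex[OF gp b c a bc ab[symmetric] ac[symmetric] wS wbc xa(2) xa(3) xa(1) Dbc] by simp
      then show False using BCn by simp
    qed
    have "(s' = a \<and> t' = b) \<or> (s' = b \<and> t' = a)"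
      using s3 t3 st(3) nac nbc by blast
    then have "nn a \<bullet> w = 0" "nn b \<bullet> w = 0" using wl by auto
    then show ?thesis using pm_meet[OF ab wS] by auto
  qed
  have exv: "is_exit_vertex S D ?m" unfolding is_exit_vertex_def using io uniq by blast
  have wit: "is_witness_line S D c" unfolding is_witness_line_def using blD exv mdl(3) by blast
  show ?thesis using tri nm wit exv by blast
qed


theorem theorem3:
  fixes S :: "(real \<times> real) set" and a b c :: "real \<times> real"
  assumes "finite S" and "general_position S"
    and "a \<in> S" and "b \<in> S" and "c \<in> S"
    and "a \<noteq> b" and "a \<noteq> c" and "b \<noteq> c"
  shows "exit_edge S a b c \<longleftrightarrow>
    (\<exists>D. triangular_cell S D a b c \<and> \<not> marked_cell S D \<and>
         is_witness_line S D c \<and> is_exit_vertex S D (meet a b))"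
proof
  assume "exit_edge S a b c"
  then show "\<exists>D. triangular_cell S D a b c \<and> \<not> marked_cell S D \<and>
         is_witness_line S D c \<and> is_exit_vertex S D (meet a b)"
    by (rule exit_imp_rhs[OF assms])
next
  assume "\<exists>D. triangular_cell S D a b c \<and> \<not> marked_cell S D \<and>
         is_witness_line S D c \<and> is_exit_vertex S D (meet a b)"
  then obtain D where "triangular_cell S D a b c" "\<not> marked_cell S D" "is_exit_vertex S D (meet a b)"
    by blast
  then show "exit_edge S a b c" by (rule rhs_imp_exit[OF assms])
qed

end
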